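(* Let $n\ge 2$ and let $(g_{ij})_{1\le i<j\le n}$ be reals with $g_{il}+g_{jk}>g_{ik}+g_{jl}$ for all $1\le i<j<k<l\le n$ and $g_{il}>g_{ik}+g_{kl}$ for all $1\le i<k<l\le n$. Let $\bar X_g=\{v\in\mathbb{R}^n: v_1=0,\ v_j-v_i\ge g_{ij}\ \forall i<j\}$ and $X_g=\{v\in\bar X_g: v_n-v_1=g_{1n}\}$. For $v\in\bar X_g$ let $E(v)=\{ij: i<j,\ v_j-v_i=g_{ij}\}$. Then $X_g$ is a simple $(n-2)$-dimensional polytope whose face poset is that of the $(n-2)$-dimensional associahedron; $v\mapsto E(v)$ gives a bijection between the vertices of $X_g$ and the non-crossing alternating trees on $\{1,\dots,n\}$, and two vertices are adjacent if and only if the corresponding trees differ in a single edge. Moreover $\bar X_g$ is an unbounded polyhedron with the same vertex set as $X_g$, and its extreme rays correspond to the non-crossing alternating trees with the edge $1n$ removed.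
   Context: A graph on $\{1,\dots,n\}$ is alternating if it has no two edges $ij,jk$ with $i<j<k$; non-crossing if it has no two edges $ik,jl$ with $i<j<k<l$. A non-crossing alternating tree is a spanning tree on $\{1,\dots,n\}$ with both properties. *)

theory Defs
  imports "HOL-Analysis.Analysis"
begin

text \<open>Coordinates are indexed by an abstract finite linearly ordered type 'n,
  playing the role of {1,...,n} (n = CARD('n)); Min UNIV is 1, Max UNIV is n.\<close>

definition first_idx :: "'n::{finite,linorder}" where
  "first_idx = Min UNIV"

definition last_idx :: "'n::{finite,linorder}" where
  "last_idx = Max UNIV"

definition Xbar :: "('n \<Rightarrow> 'n \<Rightarrow> real) \<Rightarrow> (real^'n::{finite,linorder}) set" where
  "Xbar g = {v. v $ first_idx = 0 \<and> (\<forall>i j. i < j \<longrightarrow> v $ j - v $ i \<ge> g i j)}"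

definition Xg :: "('n \<Rightarrow> 'n \<Rightarrow> real) \<Rightarrow> (real^'n::{finite,linorder}) set" where
  "Xg g = {v \<in> Xbar g. v $ last_idx - v $ first_idx = g first_idx last_idx}"

definition Eset :: "('n \<Rightarrow> 'n \<Rightarrow> real) \<Rightarrow> real^'n::{finite,linorder} \<Rightarrow> ('n \<times> 'n) set" where
  "Eset g v = {(i, j). i < j \<and> v $ j - v $ i = g i j}"

definition connected_graph :: "('n \<times> 'n) set \<Rightarrow> bool" where
  "connected_graph T \<longleftrightarrow> (\<forall>x y. (x, y) \<in> (T \<union> T\<inverse>)\<^sup>*)"

definition spanning_tree :: "('n::linorder \<times> 'n) set \<Rightarrow> bool" where
  "spanning_tree T \<longleftrightarrow> T \<subseteq> {(i, j). i < j} \<and> connected_graph T \<and>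
     (\<forall>e\<in>T. \<not> connected_graph (T - {e}))"

definition alternating :: "('n::linorder \<times> 'n) set \<Rightarrow> bool" where
  "alternating T \<longleftrightarrow> \<not> (\<exists>i j k. i < j \<and> j < k \<and> (i, j) \<in> T \<and> (j, k) \<in> T)"

definition noncrossing :: "('n::linorder \<times> 'n) set \<Rightarrow> bool" where
  "noncrossing T \<longleftrightarrow>
     \<not> (\<exists>i j k l. i < j \<and> j < k \<and> k < l \<and> (i, k) \<in> T \<and> (j, l) \<in> T)"

definition nca_tree :: "('n::linorder \<times> 'n) set \<Rightarrow> bool" where
  "nca_tree T \<longleftrightarrow> spanning_tree T \<and> alternating T \<and> noncrossing T"

definition simple_polytope :: "'a::euclidean_space set \<Rightarrow> bool" where
  "simple_polytope P \<longleftrightarrow> polytope P \<and>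
     (\<forall>v. v extreme_point_of P \<longrightarrow> card {F. F facet_of P \<and> v \<in> F} = nat (aff_dim P))"

definition adjacent_vertices :: "'a::euclidean_space set \<Rightarrow> 'a \<Rightarrow> 'a \<Rightarrow> bool" where
  "adjacent_vertices P u w \<longleftrightarrow> u \<noteq> w \<and>
     (\<exists>F. F face_of P \<and> aff_dim F = 1 \<and> u \<in> F \<and> w \<in> F)"

definition extreme_ray_of :: "'a::euclidean_space set \<Rightarrow> 'a set \<Rightarrow> bool" where
  "extreme_ray_of R P \<longleftrightarrow> R face_of P \<and> aff_dim R = 1 \<and> \<not> bounded R"

text \<open>Face poset of the associahedron of the convex (m+1)-gon with vertices 0,...,m
  (dimension m-2): sets of pairwise non-crossing diagonals, ordered by reverse inclusion.\<close>

definition diagonals :: "nat \<Rightarrow> (nat \<times> nat) set" where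
  "diagonals m = {(a, b). a + 2 \<le> b \<and> b \<le> m \<and> (a, b) \<noteq> (0, m)}"

definition noncrossing_diags :: "(nat \<times> nat) set \<Rightarrow> bool" where
  "noncrossing_diags D \<longleftrightarrow>
     \<not> (\<exists>a b c d. (a, b) \<in> D \<and> (c, d) \<in> D \<and> a < c \<and> c < b \<and> b < d)"

definition assoc_faces :: "nat \<Rightarrow> (nat \<times> nat) set set" where
  "assoc_faces m = {D. D \<subseteq> diagonals m \<and> noncrossing_diags D}"

definition face_poset_iso :: "'a::euclidean_space set \<Rightarrow> 'b set set \<Rightarrow> bool" where
  "face_poset_iso P Q \<longleftrightarrow> (\<exists>\<phi>. bij_betw \<phi> {F. F face_of P \<and> F \<noteq> {}} Q \<and>
     (\<forall>F F'. F face_of P \<and> F \<noteq> {} \<and> F' face_of P \<and> F' \<noteq> {} \<longrightarrow>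
        (F \<subseteq> F' \<longleftrightarrow> \<phi> F' \<subseteq> \<phi> F)))"

end

theory Submission
  imports Defs
begin

lemma first_le: "(first_idx::'n::{finite,linorder}) \<le> x"
  unfolding first_idx_def by simp

lemma le_last: "x \<le> (last_idx::'n::{finite,linorder})"
  unfolding last_idx_def by simp

definition ncalt :: "('n::linorder \<times> 'n) set \<Rightarrow> bool" where
  "ncalt D \<longleftrightarrow> D \<subseteq> {(i, j). i < j} \<and> alternating D \<and> noncrossing D"

lemma ncalt_subset: "ncalt D \<Longrightarrow> D' \<subseteq> D \<Longrightarrow> ncalt D'"
  unfolding ncalt_def alternating_def noncrossing_def by blast

locale NCA =
  fixes g :: "'n::{finite,linorder} \<Rightarrow> 'n \<Rightarrow> real"
  assumes card2: "CARD('n) \<ge> 2"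
    and cross: "\<And>i j k l. i < j \<Longrightarrow> j < k \<Longrightarrow> k < l \<Longrightarrow> g i l + g j k > g i k + g j l"
    and supadd: "\<And>i k l. i < k \<Longrightarrow> k < l \<Longrightarrow> g i l > g i k + g k l"
begin

lemma first_less_last: "(first_idx::'n) < last_idx"
proof (rule ccontr)
  assume "\<not> (first_idx::'n) < last_idx"
  then have "\<forall>x::'n. x = first_idx"
    using first_le le_last by (metis order.trans antisym not_less)
  then have u: "(UNIV::'n set) = {first_idx}" by auto
  have "CARD('n) = 1" by (subst u) simp
  then show False using card2 by simp
qed

lemma E_ncalt:
  assumes "v \<in> Xbar g"
  shows "ncalt (Eset g v)"
proof -
  have feas: "\<And>i j. i < j \<Longrightarrow> g i j \<le> v $ j - v $ i" using assms unfolding Xbar_def by auto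
  have alt: "alternating (Eset g v)"
    unfolding alternating_def Eset_def
  proof clarsimp
    fix i j k assume "i < j" "j < k" "v $ j - v $ i = g i j" "v $ k - v $ j = g j k"
    moreover have "g i k > g i j + g j k" using supadd \<open>i<j\<close> \<open>j<k\<close> by blast
    moreover have "g i k \<le> v $ k - v $ i" using feas \<open>i<j\<close> \<open>j<k\<close> by (meson order.strict_trans)
    ultimately show False by linarith
  qed
  have nc: "noncrossing (Eset g v)"
    unfolding noncrossing_def Eset_def
  proof clarsimp
    fix i j k l assume "i < j" "j < k" "k < l" "v $ k - v $ i = g i k" "v $ l - v $ j = g j l"
    moreover have "g i l + g j k > g i k + g j l" using cross \<open>i<j\<close> \<open>j<k\<close> \<open>k<l\<close> by blast
    moreover have "g i l \<le> v $ l - v $ i" using feas \<open>i<j\<close> \<open>j<k\<close> \<open>k<l\<close> by (meson order.strict_trans)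
    moreover have "g j k \<le> v $ k - v $ j" using feas \<open>j<k\<close> by blast
    ultimately show False by linarith
  qed
  show ?thesis using alt nc unfolding ncalt_def Eset_def by auto
qed

definition TT :: "('n \<Rightarrow> real) \<Rightarrow> 'n set \<Rightarrow> ('n \<times> 'n) set" where
  "TT v U = {(i, j). i \<in> U \<and> j \<in> U \<and> i < j \<and> v j - v i = g i j}"

lemma cross_ok:
  fixes a i k m j b :: 'n
  assumes "a \<le> i" "i \<le> k" "k < m" "m \<le> j" "j \<le> b"
    and Li: "Li \<le> (if i = a then 0 else if i = k then g a k else g a k - g i k)"
    and Rj: "Rj \<le> (if j = b then 0 else if j = m then g m b else g m b - g m j)"
  shows "g i j \<le> g a b - Rj - Li"
proof -
  have ab: "a < b" using assms by (meson order.trans order_le_less_trans order_less_le_trans)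
  consider "i = a" | "i \<noteq> a" "i = k" | "i \<noteq> a" "i \<noteq> k" by blast
  then show ?thesis
  proof cases
    case 1
    consider "j = b" | "j \<noteq> b" "j = m" | "j \<noteq> b" "j \<noteq> m" by blast
    then show ?thesis
    proof cases
      case 1 then show ?thesis using \<open>i = a\<close> Li Rj by simp
    next
      case 2
      have "a < m" "m < b" using assms 2 \<open>i = a\<close> by auto
      then have "g a b > g a m + g m b" using supadd by blast
      then show ?thesis using \<open>i = a\<close> 2 Li Rj by simp
    next
      case 3
      have "a < m" "m < j" "j < b" using assms 3 \<open>i = a\<close> by auto
      then have "g a b + g m j > g a j + g m b" using cross by blast
      then show ?thesis using \<open>i = a\<close> 3 Li Rj by simp
    qed
  next
    case 2
    have ak: "a < k" using 2 assms by auto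
    consider "j = b" | "j \<noteq> b" "j = m" | "j \<noteq> b" "j \<noteq> m" by blast
    then show ?thesis
    proof cases
      case 1
      have "g a b > g a k + g k b" using supadd ak assms \<open>j = b\<close> by auto
      then show ?thesis using 1 2 Li Rj by simp
    next
      case 3
      have "a < m" "m < j" "j < b" using assms 3 2 by auto
      then have "g a b + g m j > g a j + g m b" using cross by blast
      moreover have "g a j > g a k + g k j" using supadd ak assms \<open>m < j\<close> by auto
      ultimately show ?thesis using 2 3 Li Rj by simp
    next
      case 4: 2
      have "m < b" using assms 4 by auto
      have "g a b > g a m + g m b" using supadd \<open>m < b\<close> ak assms by auto
      moreover have "g a m > g a k + g k m" using supadd ak assms by auto
      ultimately show ?thesis using 2 4 Li Rj by simp
    qed
  next
    case 3
    have ai: "a < i" "i < k" using 3 assms by auto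
    consider "j = b" | "j \<noteq> b" "j = m" | "j \<noteq> b" "j \<noteq> m" by blast
    then show ?thesis
    proof cases
      case 1
      have "g a b + g i k > g a k + g i b" using cross ai assms \<open>j = b\<close> by auto
      then show ?thesis using 1 3 Li Rj by simp
    next
      case 4: 2
      have "m < b" using assms 4 by auto
      have "g a b > g a m + g m b" using supadd \<open>m < b\<close> ai assms by auto
      moreover have "g a m + g i k > g a k + g i m" using cross ai assms by auto
      ultimately show ?thesis using 3 4 Li Rj by simp
    next
      case 5: 3
      have "a < m" "m < j" "j < b" using assms 5 3 by auto
      then have "g a b + g m j > g a j + g m b" using cross by blast
      moreover have "g a j + g i k > g a k + g i j" using cross ai assms \<open>m < j\<close> by auto
      ultimately show ?thesis using 3 5 Li Rj by simp
    qed
  qed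
qed

end


lemma sym_rt: "(x, y) \<in> (A \<union> A\<inverse>)\<^sup>* \<Longrightarrow> (y, x) \<in> (A \<union> A\<inverse>)\<^sup>*"
proof -
  assume "(x, y) \<in> (A \<union> A\<inverse>)\<^sup>*"
  then have "(y, x) \<in> ((A \<union> A\<inverse>)\<inverse>)\<^sup>*" by (rule rtrancl_converseI)
  moreover have "(A \<union> A\<inverse>)\<inverse> = A \<union> A\<inverse>" by auto
  ultimately show ?thesis by simp
qed

lemma rt_mono: "(x, y) \<in> (A \<union> A\<inverse>)\<^sup>* \<Longrightarrow> A \<subseteq> B \<Longrightarrow> (x, y) \<in> (B \<union> B\<inverse>)\<^sup>*"
  by (metis (no_types, lifting) converse_mono rtrancl_mono sup.mono subsetD)

context NCA
begin

lemma realize_gen: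
  fixes U :: "'n set"
  assumes "U \<noteq> {}" "ncalt D" "D \<subseteq> U \<times> U"
  shows "\<exists>v::'n \<Rightarrow> real. (\<forall>i\<in>U. \<forall>j\<in>U. i < j \<longrightarrow> g i j \<le> v j - v i) \<and> (\<forall>(i,j)\<in>D. v j - v i = g i j)
     \<and> (Min U < Max U \<longrightarrow> v (Max U) - v (Min U) = g (Min U) (Max U))
     \<and> (\<forall>x\<in>U. (Min U, x) \<in> (TT v U \<union> (TT v U)\<inverse>)\<^sup>*)"
  using assms
proof (induction "card U" arbitrary: U D rule: less_induct)
  case less
  define a where "a = Min U"
  define b where "b = Max U"
  have fin: "finite U" by simp
  have aU: "a \<in> U" and bU: "b \<in> U" using less.prems(1) by (simp_all add: a_def b_def)
  have amin: "\<forall>x\<in>U. a \<le> x" and bmax: "\<forall>x\<in>U. x \<le> b" by (auto simp: a_def b_def)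
  have Dlt: "\<And>i j. (i, j) \<in> D \<Longrightarrow> i < j" using less.prems(2) unfolding ncalt_def by auto
  have DU: "\<And>i j. (i, j) \<in> D \<Longrightarrow> i \<in> U \<and> j \<in> U" using less.prems(3) by auto
  show ?case
  proof (cases "a = b")
    case True
    then have U1: "U = {a}" using amin bmax aU by (auto intro: antisym)
    have D0: "D = {}"
    proof (rule ccontr)
      assume "D \<noteq> {}"
      then obtain i j where "(i, j) \<in> D" by auto
      then show False using Dlt DU U1 by fastforce
    qed
    show ?thesis
      by (rule exI[of _ "\<lambda>_. 0"]) (simp add: U1 D0)
  next
    case False
    then have ab: "a < b" using aU bU amin by (simp add: order_le_neq_trans)
    define K where "K = {c \<in> U. c < b \<and> (a, c) \<in> D}"
    define k where "k = (if K = {} then a else Max K)"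
    have finK: "finite K" by simp
    have kU0: "k \<in> U \<and> a \<le> k \<and> k < b"
    proof (cases "K = {}")
      case True then show ?thesis using aU ab by (simp add: k_def)
    next
      case False
      then have "Max K \<in> K" using finK by simp
      then show ?thesis using False amin by (auto simp: k_def K_def)
    qed
    then have kU: "k \<in> U" "a \<le> k" "k < b" by auto
    have kD: "a < k \<Longrightarrow> (a, k) \<in> D"
    proof -
      assume "a < k"
      then have "K \<noteq> {}" by (auto simp: k_def)
      then have "Max K \<in> K" using finK by simp
      then show ?thesis using \<open>K \<noteq> {}\<close> by (auto simp: k_def K_def)
    qed
    have Kmax: "\<And>c. c \<in> U \<Longrightarrow> c < b \<Longrightarrow> (a, c) \<in> D \<Longrightarrow> c \<le> k"
    proof -
      fix c assume "c \<in> U" "c < b" "(a, c) \<in> D"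
      then have "c \<in> K" by (simp add: K_def)
      then have "K \<noteq> {}" by auto
      then show "c \<le> k" using \<open>c \<in> K\<close> finK by (simp add: k_def)
    qed
    have split: "\<And>i j. (i, j) \<in> D \<Longrightarrow> (i, j) \<noteq> (a, b) \<Longrightarrow> (j \<le> k) \<or> (k < i)"
    proof (rule ccontr)
      fix i j assume ij: "(i, j) \<in> D" "(i, j) \<noteq> (a, b)" "\<not> (j \<le> k \<or> k < i)"
      then have ik: "i \<le> k" "k < j" by auto
      have iU: "i \<in> U" "j \<in> U" using DU ij by auto
      show False
      proof (cases "i = a")
        case True
        have "j \<le> b" using bmax iU by auto
        then have "j < b" using ij True by (auto simp: order_le_neq_trans)
        then have "j \<le> k" using Kmax iU ij True by auto
        then show False using ik by simp
      next
        case False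
        then have "a < i" using amin iU by (simp add: order_le_neq_trans)
        then have "a < k" using ik by simp
        then have akD: "(a, k) \<in> D" using kD by simp
        show False
        proof (cases "i = k")
          case True
          then show False using less.prems(2) akD ij \<open>a < k\<close> ik unfolding ncalt_def alternating_def by blast
        next
          case False
          then have "i < k" using ik by simp
          then show False using less.prems(2) akD ij \<open>a < i\<close> ik unfolding ncalt_def noncrossing_def by blast
        qed
      qed
    qed
    define L where "L = {x \<in> U. x \<le> k}"
    define R where "R = {x \<in> U. k < x}"
    define m where "m = Min R"
    have aL: "a \<in> L" and kL: "k \<in> L" using aU kU by (auto simp: L_def)
    have bR: "b \<in> R" using bU kU by (auto simp: R_def)
    have LU: "L \<subseteq> U" and RU: "R \<subseteq> U" by (auto simp: L_def R_def)
    have cardL: "card L < card U"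
    proof (rule psubset_card_mono)
      have "b \<notin> L" using kU by (auto simp: L_def)
      then show "L \<subset> U" using LU bU by blast
    qed simp
    have cardR: "card R < card U"
    proof (rule psubset_card_mono)
      have "a \<notin> R" using kU by (auto simp: R_def)
      then show "R \<subset> U" using RU aU by blast
    qed simp
    have minL: "Min L = a" using aL amin LU by (intro Min_eqI) auto
    have maxL: "Max L = k" using kL by (intro Max_eqI) (auto simp: L_def)
    have Rne: "R \<noteq> {}" using bR by auto
    have mR: "m \<in> R" using Rne unfolding m_def by (intro Min_in) auto
    have mmin: "\<forall>x\<in>R. m \<le> x" unfolding m_def by (auto intro: Min_le)
    have minR: "Min R = m" by (simp add: m_def)
    have maxR: "Max R = b" using bR bmax RU by (intro Max_eqI) auto
    have km: "k < m" using mR by (simp add: R_def)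
    define DL where "DL = D \<inter> (L \<times> L)"
    define DR where "DR = D \<inter> (R \<times> R)"
    have ncL: "ncalt DL" unfolding DL_def by (rule ncalt_subset[OF less.prems(2)]) blast
    have ncR: "ncalt DR" unfolding DR_def by (rule ncalt_subset[OF less.prems(2)]) blast
    obtain vL where vL1: "\<forall>i\<in>L. \<forall>j\<in>L. i < j \<longrightarrow> g i j \<le> vL j - vL i"
      and vL2: "\<forall>(i,j)\<in>DL. vL j - vL i = g i j"
      and vL3: "Min L < Max L \<longrightarrow> vL (Max L) - vL (Min L) = g (Min L) (Max L)"
      and vL4: "\<forall>x\<in>L. (Min L, x) \<in> (TT vL L \<union> (TT vL L)\<inverse>)\<^sup>*"
      using less.hyps[OF cardL _ ncL] aL by (force simp: DL_def)
    obtain vR where vR1: "\<forall>i\<in>R. \<forall>j\<in>R. i < j \<longrightarrow> g i j \<le> vR j - vR i"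
      and vR2: "\<forall>(i,j)\<in>DR. vR j - vR i = g i j"
      and vR3: "Min R < Max R \<longrightarrow> vR (Max R) - vR (Min R) = g (Min R) (Max R)"
      and vR4: "\<forall>x\<in>R. (Min R, x) \<in> (TT vR R \<union> (TT vR R)\<inverse>)\<^sup>*"
      using less.hyps[OF cardR _ ncR] bR by (force simp: DR_def)
    define v where "v x = (if x \<le> k then vL x - vL a else g a b - (vR b - vR x))" for x
    have va: "v a = 0" using kU by (simp add: v_def)
    have vb: "v b = g a b" using kU by (auto simp: v_def)
    have feas: "\<forall>i\<in>U. \<forall>j\<in>U. i < j \<longrightarrow> g i j \<le> v j - v i"
    proof (intro ballI impI)
      fix i j assume iU: "i \<in> U" and jU: "j \<in> U" and ij: "i < j"
      consider "j \<le> k" | "k < i" | "i \<le> k" "k < j" by fastforce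
      then show "g i j \<le> v j - v i"
      proof cases
        case 1
        then have "i \<in> L" "j \<in> L" using iU jU ij by (auto simp: L_def)
        then show ?thesis using vL1 ij 1 by (auto simp: v_def)
      next
        case 2
        then have "i \<in> R" "j \<in> R" using iU jU ij by (auto simp: R_def)
        then show ?thesis using vR1 ij 2 by (auto simp: v_def)
      next
        case 3
        have iL: "i \<in> L" and jR: "j \<in> R" using 3 iU jU by (auto simp: L_def R_def)
        have ai: "a \<le> i" using amin iU by simp
        have mj: "m \<le> j" using mmin jR by simp
        have jb: "j \<le> b" using bmax jU by simp
        have Li: "vL i - vL a \<le> (if i = a then 0 else if i = k then g a k else g a k - g i k)"
        proof -
          consider "i = a" | "i \<noteq> a" "i = k" | "i \<noteq> a" "i \<noteq> k" by blast
          then show ?thesis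
          proof cases
            case 1 then show ?thesis by simp
          next
            case 2
            then have "a < k" using ai by (simp add: order_le_neq_trans)
            then show ?thesis using vL3 minL maxL 2 by simp
          next
            case 4: 3
            then have "a < k" "i < k" using ai 3 by (auto simp: order_le_neq_trans)
            then have "g i k \<le> vL k - vL i" using vL1 iL kL by blast
            moreover have "vL k - vL a = g a k" using vL3 minL maxL \<open>a < k\<close> by simp
            ultimately show ?thesis using 4 by simp
          qed
        qed
        have Rj: "vR b - vR j \<le> (if j = b then 0 else if j = m then g m b else g m b - g m j)"
        proof -
          consider "j = b" | "j \<noteq> b" "j = m" | "j \<noteq> b" "j \<noteq> m" by blast
          then show ?thesis
          proof cases
            case 1 then show ?thesis by simp
          next
            case 2
            then have "m < b" using jb by (simp add: order_le_neq_trans)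
            then show ?thesis using vR3 minR maxR 2 by simp
          next
            case 4: 3
            then have "m < b" "m < j" using jb mj by (auto simp: order_le_neq_trans)
            then have "g m j \<le> vR j - vR m" using vR1 mR jR by blast
            moreover have "vR b - vR m = g m b" using vR3 minR maxR \<open>m < b\<close> by simp
            ultimately show ?thesis using 4 by simp
          qed
        qed
        have "g i j \<le> g a b - (vR b - vR j) - (vL i - vL a)"
          by (rule cross_ok[OF ai 3(1) km mj jb Li Rj])
        then show ?thesis using 3 by (auto simp: v_def)
      qed
    qed
    have tight: "\<forall>(i,j)\<in>D. v j - v i = g i j"
    proof (clarify)
      fix i j assume ijD: "(i, j) \<in> D"
      show "v j - v i = g i j"
      proof (cases "(i, j) = (a, b)")
        case True then show ?thesis using va vb by simp
      next
        case False
        have iU: "i \<in> U" "j \<in> U" "i < j" using DU Dlt ijD by auto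
        from split[OF ijD False] show ?thesis
        proof
          assume "j \<le> k"
          then have "(i, j) \<in> DL" using ijD iU by (auto simp: DL_def L_def)
          then show ?thesis using vL2 \<open>j \<le> k\<close> iU by (auto simp: v_def)
        next
          assume "k < i"
          then have "(i, j) \<in> DR" using ijD iU by (auto simp: DR_def R_def)
          then show ?thesis using vR2 \<open>k < i\<close> iU by (auto simp: v_def)
        qed
      qed
    qed
    have TL: "TT vL L \<subseteq> TT v U"
      using LU by (auto simp: TT_def L_def v_def)
    have TR: "TT vR R \<subseteq> TT v U"
      using RU by (auto simp: TT_def R_def v_def)
    have abT: "(a, b) \<in> TT v U" using aU bU ab va vb by (simp add: TT_def)
    have conn: "\<forall>x\<in>U. (a, x) \<in> (TT v U \<union> (TT v U)\<inverse>)\<^sup>*"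
    proof
      fix x assume xU: "x \<in> U"
      show "(a, x) \<in> (TT v U \<union> (TT v U)\<inverse>)\<^sup>*"
      proof (cases "x \<le> k")
        case True
        then have "x \<in> L" using xU by (simp add: L_def)
        then show ?thesis using vL4 minL rt_mono[OF _ TL] by auto
      next
        case False
        then have "x \<in> R" using xU by (simp add: R_def)
        then have mx: "(m, x) \<in> (TT v U \<union> (TT v U)\<inverse>)\<^sup>*" using vR4 minR rt_mono[OF _ TR] by auto
        have "(m, b) \<in> (TT v U \<union> (TT v U)\<inverse>)\<^sup>*" using vR4 minR rt_mono[OF _ TR] bR by auto
        then have bm: "(b, m) \<in> (TT v U \<union> (TT v U)\<inverse>)\<^sup>*" by (rule sym_rt)
        have "(a, b) \<in> (TT v U \<union> (TT v U)\<inverse>)\<^sup>*" using abT by auto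
        then show ?thesis using bm mx by (meson rtrancl_trans)
      qed
    qed
    show ?thesis
      apply (rule exI[of _ v])
      using feas tight conn va vb ab by (simp add: a_def b_def)
  qed
qed

end


definition wt :: "('n \<times> 'n) \<Rightarrow> 'n \<Rightarrow> real" where
  "wt p z = (if snd p = z then 1 else 0) - (if fst p = z then 1 else 0)"

lemma path_flow:
  fixes A :: "('n::{finite,linorder} \<times> 'n) set"
  assumes "A \<subseteq> {(i,j). i<j}" and "(x,y) \<in> (A \<union> A\<inverse>)\<^sup>*"
  shows "\<exists>c. \<forall>z. (\<Sum>p\<in>A. c p * wt p z) = (if z = y then 1 else 0) - (if z = x then 1 else 0)"
  using assms(2)
proof (induction rule: rtrancl_induct)
  case base
  show ?case by (rule exI[of _ "\<lambda>_. 0"]) simp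
next
  case (step y w)
  obtain c where c: "\<forall>z. (\<Sum>p\<in>A. c p * wt p z) = (if z = y then 1 else 0) - (if z = x then 1 else 0)"
    using step.IH by blast
  from step.hyps(2) consider "(y,w) \<in> A" | "(w,y) \<in> A" by auto
  then show ?case
  proof cases
    case 1
    have yw: "y \<noteq> w" using 1 assms(1) by auto
    define c' where "c' p = c p + (if p = (y,w) then 1 else 0)" for p
    have "\<forall>z. (\<Sum>p\<in>A. c' p * wt p z) = (\<Sum>p\<in>A. c p * wt p z) + wt (y,w) z"
    proof
      fix z
      have "(\<Sum>p\<in>A. c' p * wt p z) = (\<Sum>p\<in>A. c p * wt p z + (if p = (y,w) then wt p z else 0))"
        by (rule sum.cong) (auto simp: c'_def algebra_simps)
      also have "\<dots> = (\<Sum>p\<in>A. c p * wt p z) + wt (y,w) z"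
        using 1 by (simp add: sum.distrib)
      finally show "(\<Sum>p\<in>A. c' p * wt p z) = (\<Sum>p\<in>A. c p * wt p z) + wt (y,w) z" .
    qed
    then show ?thesis using c yw by (intro exI[of _ c']) (auto simp: wt_def)
  next
    case 2
    have yw: "y \<noteq> w" using 2 assms(1) by auto
    define c' where "c' p = c p - (if p = (w,y) then 1 else 0)" for p
    have "\<forall>z. (\<Sum>p\<in>A. c' p * wt p z) = (\<Sum>p\<in>A. c p * wt p z) - wt (w,y) z"
    proof
      fix z
      have "(\<Sum>p\<in>A. c' p * wt p z) = (\<Sum>p\<in>A. c p * wt p z - (if p = (w,y) then wt p z else 0))"
        by (rule sum.cong) (auto simp: c'_def algebra_simps)
      also have "\<dots> = (\<Sum>p\<in>A. c p * wt p z) - wt (w,y) z"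
        using 2 by (simp add: sum_subtractf)
      finally show "(\<Sum>p\<in>A. c' p * wt p z) = (\<Sum>p\<in>A. c p * wt p z) - wt (w,y) z" .
    qed
    then show ?thesis using c yw by (intro exI[of _ c']) (auto simp: wt_def)
  qed
qed

lemma sum_other_nonzero:
  assumes "finite A" "(\<Sum>p\<in>A. h p) = (0::real)" "q \<in> A" "h q \<noteq> 0"
  shows "\<exists>p\<in>A. p \<noteq> q \<and> h p \<noteq> 0"
proof (rule ccontr)
  assume "\<not> ?thesis"
  then have "(\<Sum>p\<in>A. h p) = (\<Sum>p\<in>A. if p = q then h q else 0)"
    by (intro sum.cong) auto
  also have "\<dots> = h q" using assms by simp
  finally show False using assms by simp
qed

lemma zero_flow:
  fixes T :: "('n::{finite,linorder} \<times> 'n) set"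
  assumes nc: "ncalt T" and fl: "\<forall>z. (\<Sum>p\<in>T. c p * wt p z) = 0"
  shows "\<forall>p\<in>T. c p = 0"
proof (rule ccontr)
  assume "\<not> ?thesis"
  then obtain q0 where q0: "q0 \<in> T" "c q0 \<noteq> 0" by auto
  define S where "S = {p \<in> T. c p \<noteq> 0}"
  define ln where "ln p = card {fst p..snd p}" for p :: "'n \<times> 'n"
  obtain q where qS: "q \<in> S" and qmin: "\<And>p. p \<in> S \<Longrightarrow> ln q \<le> ln p"
    using ex_has_least_nat[of "\<lambda>p. p \<in> S" q0 ln] q0 by (auto simp: S_def)
  obtain i j where qij: "q = (i, j)" by (cases q)
  have Tlt: "\<And>a b. (a, b) \<in> T \<Longrightarrow> a < b" using nc unfolding ncalt_def by auto
  have ijT: "(i, j) \<in> T" and cij: "c (i, j) \<noteq> 0" using qS qij by (auto simp: S_def)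
  have ij: "i < j" using Tlt ijT by simp
  have alt: "\<And>a b cc. a < b \<Longrightarrow> b < cc \<Longrightarrow> (a, b) \<in> T \<Longrightarrow> (b, cc) \<in> T \<Longrightarrow> False"
    using nc unfolding ncalt_def alternating_def by blast
  have ncr: "\<And>a b cc d. a < b \<Longrightarrow> b < cc \<Longrightarrow> cc < d \<Longrightarrow> (a, cc) \<in> T \<Longrightarrow> (b, d) \<in> T \<Longrightarrow> False"
    using nc unfolding ncalt_def noncrossing_def by blast
  have wi: "\<And>p. p \<in> T \<Longrightarrow> wt p i = - (if fst p = i then 1 else 0)"
  proof -
    fix p assume pT: "p \<in> T"
    obtain a b where p: "p = (a, b)" by (cases p)
    have "b \<noteq> i" using alt[of a b j] Tlt[of a b] pT ijT ij p by auto
    then show "wt p i = - (if fst p = i then 1 else 0)" using p by (simp add: wt_def)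
  qed
  have "(\<Sum>p\<in>T. c p * wt p i) = 0" using fl by simp
  then have s1: "(\<Sum>p\<in>T. c p * (if fst p = i then 1 else 0)) = 0"
    using wi by (simp add: sum_negf)
  obtain p1 where p1: "p1 \<in> T" "p1 \<noteq> (i, j)" "c p1 * (if fst p1 = i then 1 else 0) \<noteq> 0"
    using sum_other_nonzero[OF _ s1 ijT] cij by auto
  obtain k where p1k: "p1 = (i, k)" using p1 by (cases p1) (auto split: if_splits)
  have ik: "i < k" "k \<noteq> j" using Tlt p1 p1k by auto
  have "p1 \<in> S" using p1 by (auto simp: S_def split: if_splits)
  then have lnle: "ln q \<le> ln p1" by (rule qmin)
  have jk: "j < k"
  proof (rule ccontr)
    assume "\<not> j < k"
    then have "k < j" using ik by auto
    then have "{i..k} \<subset> {i..j}" using ij by (auto simp: subset_iff)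
    then have "card {i..k} < card {i..j}" by (intro psubset_card_mono) auto
    then show False using lnle p1k qij by (simp add: ln_def)
  qed
  have wj: "\<And>p. p \<in> T \<Longrightarrow> wt p j = (if snd p = j then 1 else 0)"
  proof -
    fix p assume pT: "p \<in> T"
    obtain a b where p: "p = (a, b)" by (cases p)
    have "a \<noteq> j" using alt[of i j b] Tlt[of a b] pT ijT ij p by auto
    then show "wt p j = (if snd p = j then 1 else 0)" using p by (simp add: wt_def)
  qed
  have "(\<Sum>p\<in>T. c p * wt p j) = 0" using fl by simp
  then have s2: "(\<Sum>p\<in>T. c p * (if snd p = j then 1 else 0)) = 0"
    using wj by simp
  obtain p2 where p2: "p2 \<in> T" "p2 \<noteq> (i, j)" "c p2 * (if snd p2 = j then 1 else 0) \<noteq> 0"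
    using sum_other_nonzero[OF _ s2 ijT] cij by auto
  obtain m where p2m: "p2 = (m, j)" using p2 by (cases p2) (auto split: if_splits)
  have mj: "m < j" "m \<noteq> i" using Tlt p2 p2m by auto
  have "p2 \<in> S" using p2 by (auto simp: S_def split: if_splits)
  then have lnle2: "ln q \<le> ln p2" by (rule qmin)
  have mi: "m < i"
  proof (rule ccontr)
    assume "\<not> m < i"
    then have "i < m" using mj by auto
    then have "{m..j} \<subset> {i..j}" using ij by (auto simp: subset_iff)
    then have "card {m..j} < card {i..j}" by (intro psubset_card_mono) auto
    then show False using lnle2 p2m qij by (simp add: ln_def)
  qed
  show False using ncr[OF mi ij jk] p2 p2m p1 p1k by auto
qed

lemma forest:
  fixes T :: "('n::{finite,linorder} \<times> 'n) set"
  assumes nc: "ncalt T" and eT: "e \<in> T"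
  shows "(fst e, snd e) \<notin> ((T - {e}) \<union> (T - {e})\<inverse>)\<^sup>*"
proof
  assume path: "(fst e, snd e) \<in> ((T - {e}) \<union> (T - {e})\<inverse>)\<^sup>*"
  have sub: "T - {e} \<subseteq> {(i,j). i<j}" using nc unfolding ncalt_def by auto
  obtain c where c: "\<forall>z. (\<Sum>p\<in>T - {e}. c p * wt p z) = (if z = snd e then 1 else 0) - (if z = fst e then 1 else 0)"
    using path_flow[OF sub path] by blast
  define c' where "c' p = (if p = e then -1 else c p)" for p
  have "\<forall>z. (\<Sum>p\<in>T. c' p * wt p z) = 0"
  proof
    fix z
    have "(\<Sum>p\<in>T. c' p * wt p z) = c' e * wt e z + (\<Sum>p\<in>T - {e}. c' p * wt p z)"
      using eT by (simp add: sum.remove)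
    also have "(\<Sum>p\<in>T - {e}. c' p * wt p z) = (\<Sum>p\<in>T - {e}. c p * wt p z)"
      by (rule sum.cong) (auto simp: c'_def)
    finally show "(\<Sum>p\<in>T. c' p * wt p z) = 0" using c by (simp add: c'_def wt_def)
  qed
  then have "c' e = 0" using zero_flow[OF nc] eT by blast
  then show False by (simp add: c'_def)
qed

lemma ncalt_conn_tree:
  fixes T :: "('n::{finite,linorder} \<times> 'n) set"
  assumes nc: "ncalt T" and cg: "connected_graph T"
  shows "spanning_tree T"
  unfolding spanning_tree_def
proof (intro conjI ballI)
  show "T \<subseteq> {(i, j). i < j}" using nc unfolding ncalt_def by auto
  show "connected_graph T" by (rule cg)
  fix e assume "e \<in> T"
  show "\<not> connected_graph (T - {e})"
    using forest[OF nc \<open>e \<in> T\<close>] unfolding connected_graph_def by blast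
qed

lemma nca_tree_iff: "nca_tree T \<longleftrightarrow> spanning_tree T \<and> ncalt T"
  unfolding nca_tree_def ncalt_def spanning_tree_def by auto

lemma tree_nested_eq:
  assumes "spanning_tree T" "spanning_tree T'" "T \<subseteq> T'"
  shows "T = T'"
proof (rule ccontr)
  assume "T \<noteq> T'"
  then obtain e where e: "e \<in> T'" "e \<notin> T" using assms(3) by auto
  have "T \<subseteq> T' - {e}" using assms(3) e by auto
  then have "connected_graph (T' - {e})"
    using assms(1) unfolding spanning_tree_def connected_graph_def by (meson rt_mono)
  then show False using assms(2) e unfolding spanning_tree_def by blast
qed


definition sl :: "real^'n \<Rightarrow> 'n \<times> 'n \<Rightarrow> real" where
  "sl v p = v $ snd p - v $ fst p"

lemma sl_add[simp]: "sl (x + y) p = sl x p + sl y p" by (simp add: sl_def)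
lemma sl_diff[simp]: "sl (x - y) p = sl x p - sl y p" by (simp add: sl_def)
lemma sl_scale[simp]: "sl (c *\<^sub>R x) p = c * sl x p" by (simp add: sl_def algebra_simps)
lemma sl_zero[simp]: "sl 0 p = 0" by (simp add: sl_def)
lemma sl_sum: "sl (sum f A) p = (\<Sum>a\<in>A. sl (f a) p)"
  by (simp add: sl_def sum_subtractf)

lemma comb_eq:
  fixes A B c \<mu> :: real
  assumes "0 < \<mu>" "\<mu> < 1" "A \<ge> c" "B \<ge> c" "(1 - \<mu>) * A + \<mu> * B = c"
  shows "A = c \<and> B = c"
proof -
  have h1: "(1 - \<mu>) * (A - c) \<ge> 0" using assms by simp
  have h2: "\<mu> * (B - c) \<ge> 0" using assms by simp
  have "(1 - \<mu>) * (A - c) + \<mu> * (B - c) = 0" using assms(5) by (simp add: algebra_simps)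
  then have "(1 - \<mu>) * (A - c) = 0" "\<mu> * (B - c) = 0" using h1 h2 by linarith+
  then show ?thesis using assms(1,2) by auto
qed

lemma conn_const:
  assumes "(x, y) \<in> (T \<union> T\<inverse>)\<^sup>*" "\<forall>p\<in>T. sl z p = 0"
  shows "z $ y = z $ x"
  using assms(1)
proof (induction rule: rtrancl_induct)
  case base then show ?case by simp
next
  case (step y w)
  then show ?case using assms(2) by (auto simp: sl_def)
qed

lemma zero_on_tree:
  assumes "connected_graph T" "\<forall>p\<in>T. sl z p = 0" "z $ first_idx = 0"
  shows "z = 0"
proof -
  have "\<And>y. z $ y = 0"
    using conn_const[OF _ assms(2)] assms(1,3) unfolding connected_graph_def by metis
  then show ?thesis by (simp add: vec_eq_iff)
qed

context NCA
begin

definition FS where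
  "FS S = {v \<in> Xbar g. S \<subseteq> Eset g v}" for S :: "('n \<times> 'n) set"

definition EF where
  "EF F = (\<Inter>v\<in>F. Eset g v)"

lemma Xbar_iff: "v \<in> Xbar g \<longleftrightarrow> v $ first_idx = 0 \<and> (\<forall>i j. i < j \<longrightarrow> g i j \<le> v $ j - v $ i)"
  by (simp add: Xbar_def)

lemma Eset_iff: "p \<in> Eset g v \<longleftrightarrow> fst p < snd p \<and> sl v p = g (fst p) (snd p)"
  by (cases p) (simp add: Eset_def sl_def)

lemma Xbar_sl: "v \<in> Xbar g \<Longrightarrow> fst p < snd p \<Longrightarrow> g (fst p) (snd p) \<le> sl v p"
  by (cases p) (simp add: Xbar_def sl_def)

lemma Xg_FS: "Xg g = FS {(first_idx, last_idx)}"
  using first_less_last by (auto simp: Xg_def FS_def Eset_def)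

lemma FS_Xbar: "FS S \<subseteq> Xbar g" by (auto simp: FS_def)

lemma realize:
  assumes "ncalt D"
  shows "\<exists>u \<in> Xg g. D \<subseteq> Eset g u \<and> nca_tree (Eset g u)"
proof -
  have ex: "\<exists>v::'n \<Rightarrow> real. (\<forall>i\<in>UNIV. \<forall>j\<in>UNIV. i < j \<longrightarrow> g i j \<le> v j - v i) \<and> (\<forall>(i,j)\<in>D. v j - v i = g i j)
     \<and> (Min (UNIV::'n set) < Max UNIV \<longrightarrow> v (Max UNIV) - v (Min UNIV) = g (Min UNIV) (Max UNIV))
     \<and> (\<forall>x\<in>UNIV. (Min UNIV, x) \<in> (TT v UNIV \<union> (TT v UNIV)\<inverse>)\<^sup>*)"
    using realize_gen[OF UNIV_not_empty assms] by simp
  obtain v where v1: "\<forall>i\<in>UNIV. \<forall>j\<in>UNIV. i<j \<longrightarrow> g i j \<le> v j - v i"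
    and v2: "\<forall>(i,j)\<in>D. v j - v i = g i j"
    and v3: "Min (UNIV::'n set) < Max UNIV \<longrightarrow> v (Max UNIV) - v (Min UNIV) = g (Min UNIV) (Max UNIV)"
    and v4: "\<forall>x\<in>UNIV. (Min UNIV, x) \<in> (TT v UNIV \<union> (TT v UNIV)\<inverse>)\<^sup>*"
    using ex by blast
  define u where "u = (\<chi> i. v i - v first_idx)"
  have uc: "\<And>i. u $ i = v i - v first_idx" by (simp add: u_def)
  have ET: "Eset g u = TT v UNIV" by (auto simp: Eset_def TT_def uc)
  have uX: "u \<in> Xbar g" using v1 by (simp add: Xbar_def uc)
  have "u $ last_idx - u $ first_idx = g first_idx last_idx"
    using v3 first_less_last by (simp add: uc first_idx_def last_idx_def)
  then have uXg: "u \<in> Xg g" using uX by (simp add: Xg_def)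
  have DE: "D \<subseteq> Eset g u" using v2 assms by (auto simp: Eset_def uc ncalt_def)
  have conn: "connected_graph (Eset g u)"
    unfolding connected_graph_def
  proof (intro allI)
    fix x y
    have "(first_idx, x) \<in> (Eset g u \<union> (Eset g u)\<inverse>)\<^sup>*" "(first_idx, y) \<in> (Eset g u \<union> (Eset g u)\<inverse>)\<^sup>*"
      using v4 ET by (simp_all add: first_idx_def)
    then show "(x, y) \<in> (Eset g u \<union> (Eset g u)\<inverse>)\<^sup>*" using sym_rt rtrancl_trans by metis
  qed
  have "nca_tree (Eset g u)"
    using ncalt_conn_tree[OF E_ncalt[OF uX] conn] E_ncalt[OF uX] nca_tree_iff by auto
  then show ?thesis using uXg DE by blast
qed

lemma tree_unique:
  assumes "connected_graph T" "T \<subseteq> Eset g x" "T \<subseteq> Eset g y" "x $ first_idx = y $ first_idx"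
  shows "x = y"
proof -
  have "\<forall>p\<in>T. sl (x - y) p = 0"
  proof
    fix p assume "p \<in> T"
    then have "p \<in> Eset g x" "p \<in> Eset g y" using assms(2,3) by auto
    then show "sl (x - y) p = 0" by (simp add: Eset_iff)
  qed
  moreover have "(x - y) $ first_idx = 0" using assms(4) by simp
  ultimately have "x - y = 0" using zero_on_tree[OF assms(1)] by blast
  then show ?thesis by simp
qed

definition comp where
  "comp T e = {k. (snd e, k) \<in> ((T - {e}) \<union> (T - {e})\<inverse>)\<^sup>*}"

definition dvec where
  "dvec T e = (\<chi> k::'n. ((if k \<in> comp T e then 1 else 0) - (if first_idx \<in> comp T e then 1 else 0) :: real))"

lemma dvec_first: "dvec T e $ first_idx = 0"
  by (simp add: dvec_def)

lemma dvec_other: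
  assumes "p \<in> T" "p \<noteq> e"
  shows "sl (dvec T e) p = 0"
proof -
  have "fst p \<in> comp T e \<longleftrightarrow> snd p \<in> comp T e"
  proof
    assume "fst p \<in> comp T e"
    then have "(snd e, fst p) \<in> ((T - {e}) \<union> (T - {e})\<inverse>)\<^sup>*" by (simp add: comp_def)
    moreover have "(fst p, snd p) \<in> ((T - {e}) \<union> (T - {e})\<inverse>)" using assms by (cases p) auto
    ultimately have "(snd e, snd p) \<in> ((T - {e}) \<union> (T - {e})\<inverse>)\<^sup>*" by (rule rtrancl_into_rtrancl)
    then show "snd p \<in> comp T e" by (simp add: comp_def)
  next
    assume "snd p \<in> comp T e"
    then have "(snd e, snd p) \<in> ((T - {e}) \<union> (T - {e})\<inverse>)\<^sup>*" by (simp add: comp_def)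
    moreover have "(snd p, fst p) \<in> ((T - {e}) \<union> (T - {e})\<inverse>)" using assms by (cases p) auto
    ultimately have "(snd e, fst p) \<in> ((T - {e}) \<union> (T - {e})\<inverse>)\<^sup>*" by (rule rtrancl_into_rtrancl)
    then show "fst p \<in> comp T e" by (simp add: comp_def)
  qed
  then show ?thesis by (simp add: sl_def dvec_def)
qed

lemma dvec_e:
  assumes "ncalt T" "e \<in> T"
  shows "sl (dvec T e) e = 1"
proof -
  have "snd e \<in> comp T e" by (simp add: comp_def)
  moreover have "fst e \<notin> comp T e"
  proof
    assume "fst e \<in> comp T e"
    then have "(snd e, fst e) \<in> ((T - {e}) \<union> (T - {e})\<inverse>)\<^sup>*" by (simp add: comp_def)
    then have "(fst e, snd e) \<in> ((T - {e}) \<union> (T - {e})\<inverse>)\<^sup>*" by (rule sym_rt)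
    then show False using forest[OF assms] by simp
  qed
  ultimately show ?thesis by (simp add: sl_def dvec_def)
qed

lemma dvec_sl:
  assumes "ncalt T" "e \<in> T" "p \<in> T"
  shows "sl (dvec T e) p = (if p = e then 1 else 0)"
  using dvec_e[OF assms(1,2)] dvec_other[OF assms(3)] by auto

lemma dvec_bound: "\<bar>sl (dvec T e) p\<bar> \<le> 1"
  by (simp add: sl_def dvec_def)

lemma nca_ncalt: "nca_tree T \<Longrightarrow> ncalt T" by (simp add: nca_tree_iff)
lemma nca_conn: "nca_tree T \<Longrightarrow> connected_graph T" by (simp add: nca_tree_iff spanning_tree_def)

lemma pert:
  assumes uX: "u \<in> Xbar g" and tr: "nca_tree (Eset g u)"
  shows "\<exists>t>0. \<forall>e\<in>Eset g u. u + t *\<^sub>R dvec (Eset g u) e \<in> Xbar g \<and>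
           Eset g (u + t *\<^sub>R dvec (Eset g u) e) = Eset g u - {e}"
proof -
  define T where "T = Eset g u"
  define Q where "Q = {p. fst p < snd p \<and> p \<notin> T}"
  define Sl where "Sl = (\<lambda>p. sl u p - g (fst p) (snd p)) ` Q"
  define t where "t = Min (insert 1 Sl) / 2"
  have finSl: "finite Sl" by (simp add: Sl_def)
  have Slpos: "\<forall>s\<in>Sl. s > 0"
  proof
    fix s assume "s \<in> Sl"
    then obtain p where p: "p \<in> Q" "s = sl u p - g (fst p) (snd p)" by (auto simp: Sl_def)
    have "g (fst p) (snd p) \<le> sl u p" using Xbar_sl[OF uX] p by (simp add: Q_def)
    moreover have "sl u p \<noteq> g (fst p) (snd p)" using p by (auto simp: Q_def T_def Eset_iff)
    ultimately show "s > 0" using p by simp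
  qed
  have "Min (insert 1 Sl) > 0" using finSl Slpos by (subst Min_gr_iff) auto
  then have tpos: "t > 0" by (simp add: t_def)
  have tle: "2 * t \<le> sl u p - g (fst p) (snd p)" if pQ: "p \<in> Q" for p
  proof -
    have "sl u p - g (fst p) (snd p) \<in> Sl" using pQ by (simp add: Sl_def)
    then have "Min (insert 1 Sl) \<le> sl u p - g (fst p) (snd p)" using finSl by (intro Min_le) auto
    then show ?thesis by (simp add: t_def)
  qed
  have nc: "ncalt T" using tr by (simp add: T_def nca_ncalt)
  have "\<forall>e\<in>T. u + t *\<^sub>R dvec T e \<in> Xbar g \<and> Eset g (u + t *\<^sub>R dvec T e) = T - {e}"
  proof
    fix e assume eT: "e \<in> T"
    define w where "w = u + t *\<^sub>R dvec T e"
    have wsl: "\<And>p. sl w p = sl u p + t * sl (dvec T e) p" by (simp add: w_def)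
    have pos: "\<And>p. fst p < snd p \<Longrightarrow> p \<notin> T - {e} \<Longrightarrow> sl w p > g (fst p) (snd p)"
    proof -
      fix p assume p: "fst p < snd p" "p \<notin> T - {e}"
      show "sl w p > g (fst p) (snd p)"
      proof (cases "p = e")
        case True
        then have "sl w p = g (fst p) (snd p) + t"
          using wsl dvec_e[OF nc eT] eT by (simp add: T_def Eset_iff)
        then show ?thesis using tpos by simp
      next
        case False
        then have "p \<in> Q" using p by (simp add: Q_def)
        then have "2 * t \<le> sl u p - g (fst p) (snd p)" by (rule tle)
        moreover have "t * sl (dvec T e) p \<ge> - t"
        proof -
          have "-1 \<le> sl (dvec T e) p" using dvec_bound[of T e p] by (simp add: abs_le_iff)
          then have "t * (-1) \<le> t * sl (dvec T e) p" using tpos by (intro mult_left_mono) auto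
          then show ?thesis by simp
        qed
        ultimately show ?thesis using wsl[of p] tpos by linarith
      qed
    qed
    have tightp: "\<And>p. p \<in> T - {e} \<Longrightarrow> sl w p = g (fst p) (snd p) \<and> fst p < snd p"
      using wsl dvec_other by (auto simp: T_def Eset_iff)
    have wX: "w \<in> Xbar g"
    proof -
      have "w $ first_idx = 0" using uX by (simp add: w_def dvec_first Xbar_def)
      moreover have "\<forall>i j. i < j \<longrightarrow> g i j \<le> w $ j - w $ i"
      proof (intro allI impI)
        fix i j :: 'n assume ij: "i < j"
        show "g i j \<le> w $ j - w $ i"
          using pos[of "(i,j)"] tightp[of "(i,j)"] ij by (cases "(i,j) \<in> T - {e}") (auto simp: sl_def)
      qed
      ultimately show ?thesis by (simp add: Xbar_def)
    qed
    have "Eset g w = T - {e}"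
    proof
      show "Eset g w \<subseteq> T - {e}"
      proof
        fix p assume "p \<in> Eset g w"
        then have "fst p < snd p" "sl w p = g (fst p) (snd p)" by (auto simp: Eset_iff)
        then show "p \<in> T - {e}" using pos[of p] by (cases "p \<in> T - {e}") auto
      qed
      show "T - {e} \<subseteq> Eset g w"
      proof
        fix p assume "p \<in> T - {e}"
        then show "p \<in> Eset g w" using tightp[of p] by (simp add: Eset_iff)
      qed
    qed
    then show "u + t *\<^sub>R dvec T e \<in> Xbar g \<and> Eset g (u + t *\<^sub>R dvec T e) = T - {e}"
      using wX by (simp add: w_def)
  qed
  then show ?thesis using tpos by (auto simp: T_def)
qed

lemma FS_span_gen:
  assumes uX: "u \<in> Xbar g" and tr: "nca_tree (Eset g u)" and ST: "S \<subseteq> Eset g u"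
    and v1: "v $ first_idx = 0" and vS': "S \<subseteq> Eset g v"
  shows "v - u \<in> span (dvec (Eset g u) ` (Eset g u - S))"
proof -
  define T where "T = Eset g u"
  have nc: "ncalt T" using tr by (simp add: T_def nca_ncalt)
  define w where "w = v - u - (\<Sum>e\<in>T - S. sl (v - u) e *\<^sub>R dvec T e)"
  have "\<forall>p\<in>T. sl w p = 0"
  proof
    fix p assume pT: "p \<in> T"
    have "sl w p = sl (v - u) p - (\<Sum>e\<in>T - S. sl (v - u) e * sl (dvec T e) p)"
      by (simp add: w_def sl_sum)
    also have "(\<Sum>e\<in>T - S. sl (v - u) e * sl (dvec T e) p) = (\<Sum>e\<in>T - S. if e = p then sl (v - u) p else 0)"
      by (rule sum.cong) (auto simp: dvec_sl[OF nc _ pT])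
    also have "\<dots> = (if p \<in> T - S then sl (v - u) p else 0)" by simp
    finally show "sl w p = 0"
    proof -
      assume eq: "sl w p = sl (v - u) p - (if p \<in> T - S then sl (v - u) p else 0)"
      show ?thesis
      proof (cases "p \<in> S")
        case True
        then have "p \<in> Eset g v" "p \<in> Eset g u" using vS' ST by auto
        then have "sl (v - u) p = 0" by (simp add: Eset_iff)
        then show ?thesis using eq by simp
      next
        case False then show ?thesis using eq pT by simp
      qed
    qed
  qed
  moreover have "w $ first_idx = 0"
    using uX v1 by (simp add: w_def dvec_first Xbar_def)
  ultimately have "w = 0" using zero_on_tree nca_conn[OF tr] by (simp add: T_def)
  then have "v - u = (\<Sum>e\<in>T - S. sl (v - u) e *\<^sub>R dvec T e)" unfolding w_def by (simp only: right_minus_eq)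
  also have "\<dots> \<in> span (dvec T ` (T - S))"
    by (intro span_sum span_scale span_base) auto
  finally show ?thesis by (simp add: T_def)
qed

lemma FS_span:
  assumes uX: "u \<in> Xbar g" and tr: "nca_tree (Eset g u)" and ST: "S \<subseteq> Eset g u" and vS: "v \<in> FS S"
  shows "v - u \<in> span (dvec (Eset g u) ` (Eset g u - S))"
  using FS_span_gen[OF uX tr ST] vS by (simp add: FS_def Xbar_def)

lemma dvec_indep:
  assumes tr: "nca_tree T" and tpos: "t > 0" and AT: "A \<subseteq> T"
  shows "independent ((\<lambda>e. t *\<^sub>R dvec T e) ` A) \<and> inj_on (\<lambda>e. t *\<^sub>R dvec T e) A"
proof -
  have nc: "ncalt T" using tr by (simp add: nca_ncalt)
  have inj: "inj_on (\<lambda>e. t *\<^sub>R dvec T e) A"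
  proof (rule inj_onI)
    fix e e' assume e: "e \<in> A" "e' \<in> A" "t *\<^sub>R dvec T e = t *\<^sub>R dvec T e'"
    then have deq: "dvec T e = dvec T e'" using tpos by simp
    have eT: "e \<in> T" "e' \<in> T" using e(1,2) AT by auto
    have "sl (dvec T e) e = 1" using dvec_sl[OF nc eT(1) eT(1)] by simp
    moreover have "sl (dvec T e') e = (if e = e' then 1 else 0)" using dvec_sl[OF nc eT(2) eT(1)] by auto
    ultimately show "e = e'" using deq by (auto split: if_splits)
  qed
  have "independent ((\<lambda>e. t *\<^sub>R dvec T e) ` A)"
  proof (rule independent_if_scalars_zero)
    show "finite ((\<lambda>e. t *\<^sub>R dvec T e) ` A)" by simp
    fix f x assume sum0: "(\<Sum>x\<in>(\<lambda>e. t *\<^sub>R dvec T e) ` A. f x *\<^sub>R x) = 0"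
      and xA: "x \<in> (\<lambda>e. t *\<^sub>R dvec T e) ` A"
    obtain e0 where e0: "e0 \<in> A" "x = t *\<^sub>R dvec T e0" using xA by auto
    have "0 = sl (\<Sum>x\<in>(\<lambda>e. t *\<^sub>R dvec T e) ` A. f x *\<^sub>R x) e0" using sum0 by simp
    also have "\<dots> = (\<Sum>e\<in>A. f (t *\<^sub>R dvec T e) * (t * sl (dvec T e) e0))"
      by (simp add: sl_sum sum.reindex[OF inj] mult.assoc)
    also have "\<dots> = (\<Sum>e\<in>A. if e = e0 then f (t *\<^sub>R dvec T e0) * t else 0)"
    proof (rule sum.cong)
      fix e assume "e \<in> A"
      then have eT: "e \<in> T" "e0 \<in> T" using AT e0 by auto
      show "f (t *\<^sub>R dvec T e) * (t * sl (dvec T e) e0) = (if e = e0 then f (t *\<^sub>R dvec T e0) * t else 0)"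
        using dvec_sl[OF nc eT] by auto
    qed simp
    also have "\<dots> = f x * t" using e0 by simp
    finally show "f x = 0" using tpos by simp
  qed
  then show ?thesis using inj by simp
qed

lemma aff_dim_FS:
  assumes uX: "u \<in> Xbar g" and tr: "nca_tree (Eset g u)" and ST: "S \<subseteq> Eset g u"
  shows "aff_dim (FS S) = int (card (Eset g u - S))"
proof (rule antisym)
  define T where "T = Eset g u"
  have nc: "ncalt T" using tr by (simp add: T_def nca_ncalt)
  have ind1: "independent (dvec T ` (T - S)) \<and> inj_on (dvec T) (T - S)"
    using dvec_indep[OF tr[folded T_def], of 1 "T - S"] by simp
  have "FS S \<subseteq> (+) u ` span (dvec T ` (T - S))"
  proof
    fix v assume "v \<in> FS S"
    then have "v - u \<in> span (dvec T ` (T - S))" using FS_span[OF uX tr ST] by (simp add: T_def)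
    then show "v \<in> (+) u ` span (dvec T ` (T - S))" by (intro image_eqI[of _ _ "v - u"]) auto
  qed
  then have "aff_dim (FS S) \<le> aff_dim ((+) u ` span (dvec T ` (T - S)))" by (rule aff_dim_subset)
  also have "\<dots> = int (card (T - S))"
    using ind1 by (simp add: aff_dim_translation_eq aff_dim_subspace dim_span_eq_card_independent dim_eq_card_independent card_image)
  finally show "aff_dim (FS S) \<le> int (card (Eset g u - S))" by (simp add: T_def)
  obtain t where tpos: "t > 0" and tprop: "\<forall>e\<in>T. u + t *\<^sub>R dvec T e \<in> Xbar g \<and>
           Eset g (u + t *\<^sub>R dvec T e) = T - {e}"
    using pert[OF uX tr] by (auto simp: T_def)
  define Qs where "Qs = (\<lambda>e. u + t *\<^sub>R dvec T e) ` (T - S)"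
  have ind2: "independent ((\<lambda>e. t *\<^sub>R dvec T e) ` (T - S)) \<and> inj_on (\<lambda>e. t *\<^sub>R dvec T e) (T - S)"
    using dvec_indep[OF tr[folded T_def] tpos, of "T - S"] by simp
  have uQ: "u \<notin> Qs"
  proof
    assume "u \<in> Qs"
    then obtain e where e: "e \<in> T - S" "u = u + t *\<^sub>R dvec T e" by (auto simp: Qs_def)
    then have "sl (t *\<^sub>R dvec T e) e = 0" by (metis add_cancel_left_right sl_zero)
    then have "t * sl (dvec T e) e = 0" by (simp only: sl_scale)
    moreover have "sl (dvec T e) e = 1" using dvec_e[OF nc] e by auto
    ultimately show False using tpos by simp
  qed
  have injQ: "inj_on (\<lambda>e. u + t *\<^sub>R dvec T e) (T - S)"
    using ind2 unfolding inj_on_def by auto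
  have "(+) (- u) ` Qs = (\<lambda>e. t *\<^sub>R dvec T e) ` (T - S)"
    unfolding Qs_def image_image by simp
  then have "\<not> affine_dependent (insert u Qs)"
    using affine_dependent_iff_dependent[OF uQ] ind2 by simp
  then have "int (card (insert u Qs)) = aff_dim (insert u Qs) + 1" by (rule aff_dim_affine_independent)
  moreover have "card (insert u Qs) = card (T - S) + 1"
    using uQ injQ by (simp add: Qs_def card_image)
  moreover have "insert u Qs \<subseteq> FS S"
  proof -
    have "u \<in> FS S" using uX ST by (simp add: FS_def)
    moreover have "Qs \<subseteq> FS S"
    proof
      fix x assume "x \<in> Qs"
      then obtain e where e: "e \<in> T - S" "x = u + t *\<^sub>R dvec T e" by (auto simp: Qs_def)
      then show "x \<in> FS S" using tprop ST by (auto simp: FS_def T_def)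
    qed
    ultimately show ?thesis by simp
  qed
  then have "aff_dim (insert u Qs) \<le> aff_dim (FS S)" by (rule aff_dim_subset)
  ultimately show "int (card (Eset g u - S)) \<le> aff_dim (FS S)" by (simp add: T_def)
qed

lemma EF_FS:
  assumes uX: "u \<in> Xbar g" and tr: "nca_tree (Eset g u)" and ST: "S \<subseteq> Eset g u"
  shows "EF (FS S) = S"
proof
  show "S \<subseteq> EF (FS S)" by (auto simp: EF_def FS_def)
  show "EF (FS S) \<subseteq> S"
  proof
    fix p assume pE: "p \<in> EF (FS S)"
    have uF: "u \<in> FS S" using uX ST by (simp add: FS_def)
    then have pT: "p \<in> Eset g u" using pE by (auto simp: EF_def)
    show "p \<in> S"
    proof (rule ccontr)
      assume "p \<notin> S"
      obtain t where tprop: "\<forall>e\<in>Eset g u. u + t *\<^sub>R dvec (Eset g u) e \<in> Xbar g \<and>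
           Eset g (u + t *\<^sub>R dvec (Eset g u) e) = Eset g u - {e}"
        using pert[OF uX tr] by auto
      have "u + t *\<^sub>R dvec (Eset g u) p \<in> FS S" using tprop pT ST \<open>p \<notin> S\<close> by (auto simp: FS_def)
      then have "p \<in> Eset g (u + t *\<^sub>R dvec (Eset g u) p)" using pE by (auto simp: EF_def)
      then show False using tprop pT by auto
    qed
  qed
qed

end


context NCA
begin

lemma comb_ge:
  fixes A B c \<mu> :: real
  assumes "0 \<le> \<mu>" "\<mu> \<le> 1" "A \<ge> c" "B \<ge> c"
  shows "(1 - \<mu>) * A + \<mu> * B \<ge> c"
proof -
  have "(1 - \<mu>) * c \<le> (1 - \<mu>) * A" using assms by (intro mult_left_mono) auto
  moreover have "\<mu> * c \<le> \<mu> * B" using assms by (intro mult_left_mono) auto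
  moreover have "(1 - \<mu>) * c + \<mu> * c = c" by (simp add: algebra_simps)
  ultimately show ?thesis by linarith
qed

lemma sl_comb: "sl ((1 - \<mu>) *\<^sub>R a + \<mu> *\<^sub>R b) p = (1 - \<mu>) * sl a p + \<mu> * sl b p"
  by simp

lemma Xbar_convex: "convex (Xbar g)"
  unfolding convex_alt
proof (intro ballI allI impI)
  fix x y and \<mu> :: real assume x: "x \<in> Xbar g" and y: "y \<in> Xbar g" and \<mu>: "0 \<le> \<mu> \<and> \<mu> \<le> 1"
  show "(1 - \<mu>) *\<^sub>R x + \<mu> *\<^sub>R y \<in> Xbar g"
    unfolding Xbar_iff
  proof (intro conjI allI impI)
    show "((1 - \<mu>) *\<^sub>R x + \<mu> *\<^sub>R y) $ first_idx = 0" using x y by (simp add: Xbar_iff)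
    fix i j :: 'n assume ij: "i < j"
    have "g i j \<le> x $ j - x $ i" "g i j \<le> y $ j - y $ i" using x y ij by (auto simp: Xbar_iff)
    then have "g i j \<le> (1 - \<mu>) * (x $ j - x $ i) + \<mu> * (y $ j - y $ i)"
      using comb_ge \<mu> by blast
    then show "g i j \<le> ((1 - \<mu>) *\<^sub>R x + \<mu> *\<^sub>R y) $ j - ((1 - \<mu>) *\<^sub>R x + \<mu> *\<^sub>R y) $ i"
      by (simp add: algebra_simps)
  qed
qed

lemma Eset_comb:
  assumes x: "x \<in> Xbar g" and y: "y \<in> Xbar g" and \<mu>: "0 < \<mu>" "\<mu> < 1"
  shows "Eset g ((1 - \<mu>) *\<^sub>R x + \<mu> *\<^sub>R y) = Eset g x \<inter> Eset g y"
proof (intro set_eqI iffI)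
  fix p assume p: "p \<in> Eset g ((1 - \<mu>) *\<^sub>R x + \<mu> *\<^sub>R y)"
  then have lt: "fst p < snd p" and eq: "(1 - \<mu>) * sl x p + \<mu> * sl y p = g (fst p) (snd p)"
    by (auto simp: Eset_iff)
  have "sl x p = g (fst p) (snd p) \<and> sl y p = g (fst p) (snd p)"
    using comb_eq[OF \<mu> Xbar_sl[OF x lt] Xbar_sl[OF y lt] eq] .
  then show "p \<in> Eset g x \<inter> Eset g y" using lt by (simp add: Eset_iff)
next
  fix p assume "p \<in> Eset g x \<inter> Eset g y"
  then have "fst p < snd p" "sl x p = g (fst p) (snd p)" "sl y p = g (fst p) (snd p)"
    by (auto simp: Eset_iff)
  then show "p \<in> Eset g ((1 - \<mu>) *\<^sub>R x + \<mu> *\<^sub>R y)"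
    by (simp add: Eset_iff algebra_simps)
qed

lemma FS_face: "FS S face_of Xbar g"
  unfolding face_of_def
proof (intro conjI ballI impI)
  show "FS S \<subseteq> Xbar g" by (rule FS_Xbar)
  show "convex (FS S)"
    unfolding convex_alt
  proof (intro ballI allI impI)
    fix x y and \<mu> :: real assume x: "x \<in> FS S" and y: "y \<in> FS S" and \<mu>: "0 \<le> \<mu> \<and> \<mu> \<le> 1"
    have "(1 - \<mu>) *\<^sub>R x + \<mu> *\<^sub>R y \<in> Xbar g"
      using Xbar_convex x y \<mu> unfolding convex_alt FS_def by blast
    moreover have "S \<subseteq> Eset g ((1 - \<mu>) *\<^sub>R x + \<mu> *\<^sub>R y)"
    proof
      fix p assume "p \<in> S"
      then have "p \<in> Eset g x" "p \<in> Eset g y" using x y by (auto simp: FS_def)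
      then have "fst p < snd p" "sl x p = g (fst p) (snd p)" "sl y p = g (fst p) (snd p)"
        by (auto simp: Eset_iff)
      then show "p \<in> Eset g ((1 - \<mu>) *\<^sub>R x + \<mu> *\<^sub>R y)"
        by (simp add: Eset_iff algebra_simps)
    qed
    ultimately show "(1 - \<mu>) *\<^sub>R x + \<mu> *\<^sub>R y \<in> FS S" by (simp add: FS_def)
  qed
  fix a b x assume a: "a \<in> Xbar g" and b: "b \<in> Xbar g" and x: "x \<in> FS S"
    and seg: "x \<in> open_segment a b"
  obtain \<mu> where \<mu>: "0 < \<mu>" "\<mu> < 1" and xe: "x = (1 - \<mu>) *\<^sub>R a + \<mu> *\<^sub>R b"
    using seg by (auto simp: in_segment)
  have "S \<subseteq> Eset g x" using x by (simp add: FS_def)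
  also have "Eset g x = Eset g a \<inter> Eset g b" using Eset_comb[OF a b \<mu>] xe by simp
  finally show "a \<in> FS S" "b \<in> FS S" using a b by (auto simp: FS_def)
qed

lemma face_point:
  assumes F: "F face_of Xbar g" and ne: "F \<noteq> {}"
  shows "\<exists>w\<in>F. Eset g w = EF F"
proof -
  obtain w0 where "w0 \<in> F" using ne by auto
  obtain w where wF: "w \<in> F" and wmin: "\<And>x. x \<in> F \<Longrightarrow> card (Eset g w) \<le> card (Eset g x)"
    using ex_has_least_nat[of "\<lambda>w. w \<in> F" w0 "\<lambda>w. card (Eset g w)"] \<open>w0 \<in> F\<close> by blast
  have FX: "F \<subseteq> Xbar g" using F by (rule face_of_imp_subset)
  have cF: "convex F" using F by (rule face_of_imp_convex)
  have sub: "Eset g w \<subseteq> Eset g x" if xF: "x \<in> F" for x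
  proof (rule ccontr)
    assume nsub: "\<not> Eset g w \<subseteq> Eset g x"
    define z where "z = (1 - 1/2) *\<^sub>R w + (1/2::real) *\<^sub>R x"
    have h: "(1 - u) *\<^sub>R w + u *\<^sub>R x \<in> F" if "0 \<le> u" "u \<le> 1" for u
      using cF wF xF that unfolding convex_alt by blast
    have zF: "z \<in> F" unfolding z_def by (rule h) auto
    have "Eset g z = Eset g w \<inter> Eset g x"
      unfolding z_def by (rule Eset_comb) (use FX wF xF in auto)
    then have "Eset g z \<subset> Eset g w" using nsub by auto
    then have "card (Eset g z) < card (Eset g w)" by (intro psubset_card_mono) auto
    then show False using wmin[OF zF] by simp
  qed
  have "Eset g w = EF F"
  proof
    show "Eset g w \<subseteq> EF F" using sub by (auto simp: EF_def)
    show "EF F \<subseteq> Eset g w" using wF by (auto simp: EF_def)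
  qed
  then show ?thesis using wF by blast
qed

lemma face_FS:
  assumes F: "F face_of Xbar g" and ne: "F \<noteq> {}"
  shows "F = FS (EF F)"
proof
  have FX: "F \<subseteq> Xbar g" using F by (rule face_of_imp_subset)
  show "F \<subseteq> FS (EF F)" using FX by (auto simp: FS_def EF_def)
  obtain w where wF: "w \<in> F" and wE: "Eset g w = EF F" using face_point[OF F ne] by blast
  have wX: "w \<in> Xbar g" using FX wF by auto
  show "FS (EF F) \<subseteq> F"
  proof
    fix x assume xS: "x \<in> FS (EF F)"
    then have xX: "x \<in> Xbar g" and wx: "Eset g w \<subseteq> Eset g x" using wE by (auto simp: FS_def)
    show "x \<in> F"
    proof (cases "x = w")
      case True then show ?thesis using wF by simp
    next
      case False
      define Q where "Q = {p. fst p < snd p \<and> p \<notin> Eset g w}"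
      define Sl where "Sl = (\<lambda>p. (sl w p - g (fst p) (snd p)) / (sl x p - g (fst p) (snd p) + 1)) ` Q"
      define \<epsilon> where "\<epsilon> = Min (insert 1 Sl)"
      have finSl: "finite Sl" by (simp add: Sl_def)
      have Qpos: "sl w p - g (fst p) (snd p) > 0" "sl x p - g (fst p) (snd p) \<ge> 0" if "p \<in> Q" for p
      proof -
        have lt: "fst p < snd p" "p \<notin> Eset g w" using that by (auto simp: Q_def)
        show "sl x p - g (fst p) (snd p) \<ge> 0" using Xbar_sl[OF xX lt(1)] by simp
        have "sl w p \<noteq> g (fst p) (snd p)" using lt by (simp add: Eset_iff)
        then show "sl w p - g (fst p) (snd p) > 0" using Xbar_sl[OF wX lt(1)] by simp
      qed
      have "Min (insert 1 Sl) > 0"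
        using finSl by (subst Min_gr_iff) (auto simp: Sl_def intro!: divide_pos_pos dest: Qpos)
      then have epos: "\<epsilon> > 0" by (simp add: \<epsilon>_def)
      have ele: "\<epsilon> * (sl x p - g (fst p) (snd p) + 1) \<le> sl w p - g (fst p) (snd p)" if pQ: "p \<in> Q" for p
      proof -
        have "(sl w p - g (fst p) (snd p)) / (sl x p - g (fst p) (snd p) + 1) \<in> Sl"
          using pQ by (simp add: Sl_def)
        then have "\<epsilon> \<le> (sl w p - g (fst p) (snd p)) / (sl x p - g (fst p) (snd p) + 1)"
          using finSl unfolding \<epsilon>_def by (intro Min_le) auto
        moreover have "sl x p - g (fst p) (snd p) + 1 > 0" using Qpos(2)[OF pQ] by simp
        ultimately show ?thesis by (simp add: pos_le_divide_eq)
      qed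
      define y where "y = (1 + \<epsilon>) *\<^sub>R w - \<epsilon> *\<^sub>R x"
      have ysl: "sl y p = (1 + \<epsilon>) * sl w p - \<epsilon> * sl x p" for p by (simp add: y_def)
      have yX: "y \<in> Xbar g"
        unfolding Xbar_iff
      proof (intro conjI allI impI)
        show "y $ first_idx = 0" using wX xX by (simp add: y_def Xbar_iff)
        fix i j :: 'n assume ij: "i < j"
        define p where "p = (i, j)"
        have lt: "fst p < snd p" using ij by (simp add: p_def)
        have "g (fst p) (snd p) \<le> sl y p"
        proof (cases "p \<in> Eset g w")
          case True
          then have "sl w p = g (fst p) (snd p)" "sl x p = g (fst p) (snd p)" using wx by (auto simp: Eset_iff)
          then show ?thesis by (simp add: ysl algebra_simps)
        next
          case False
          then have pQ: "p \<in> Q" using lt by (simp add: Q_def)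
          define sw where "sw = sl w p - g (fst p) (snd p)"
          define sx where "sx = sl x p - g (fst p) (snd p)"
          have "\<epsilon> * (sx + 1) \<le> sw" using ele[OF pQ] by (simp add: sw_def sx_def)
          moreover have "\<epsilon> * sw \<ge> 0" using epos Qpos(1)[OF pQ] by (simp add: sw_def)
          moreover have "sl y p - g (fst p) (snd p) = sw + \<epsilon> * sw - \<epsilon> * sx"
            by (simp add: ysl sw_def sx_def algebra_simps)
          moreover have "\<epsilon> * (sx + 1) = \<epsilon> * sx + \<epsilon>" by (simp add: algebra_simps)
          ultimately show ?thesis using epos by linarith
        qed
        then show "g i j \<le> y $ j - y $ i" by (simp add: p_def sl_def)
      qed
      have xy: "x \<noteq> y"
      proof
        assume "x = y"
        have "x $ i = w $ i" for i
        proof -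
          have "x $ i = (1 + \<epsilon>) * w $ i - \<epsilon> * x $ i" using \<open>x = y\<close> by (simp add: y_def vec_eq_iff)
          then have "(1 + \<epsilon>) * (x $ i - w $ i) = 0" by (simp add: algebra_simps)
          then show ?thesis using epos by simp
        qed
        then show False using False by (simp add: vec_eq_iff)
      qed
      have "w = (1 - 1 / (1 + \<epsilon>)) *\<^sub>R x + (1 / (1 + \<epsilon>)) *\<^sub>R y"
      proof -
        define c where "c = 1 / (1 + \<epsilon>)"
        have c1: "c * (1 + \<epsilon>) = 1" using epos by (simp add: c_def)
        have "w $ i = ((1 - c) *\<^sub>R x + c *\<^sub>R y) $ i" for i
        proof -
          have "((1 - c) *\<^sub>R x + c *\<^sub>R y) $ i = (1 - c) * x $ i + c * ((1 + \<epsilon>) * w $ i - \<epsilon> * x $ i)"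
            by (simp add: y_def)
          also have "\<dots> = x $ i - (c * (1 + \<epsilon>)) * x $ i + (c * (1 + \<epsilon>)) * w $ i"
            by (simp add: algebra_simps)
          also have "\<dots> = w $ i" using c1 by simp
          finally show ?thesis by simp
        qed
        then have "w = (1 - c) *\<^sub>R x + c *\<^sub>R y" by (simp add: vec_eq_iff)
        then show ?thesis by (simp add: c_def)
      qed
      moreover have "0 < 1 / (1 + \<epsilon>)" "1 / (1 + \<epsilon>) < 1" using epos by auto
      ultimately have "w \<in> open_segment x y" using xy unfolding in_segment by blast
      then show "x \<in> F" using F xX yX wF unfolding face_of_def by blast
    qed
  qed
qed

lemma face_EF_ncalt:
  assumes F: "F face_of Xbar g" and ne: "F \<noteq> {}"
  shows "ncalt (EF F)"
proof -
  obtain w where "w \<in> F" "Eset g w = EF F" using face_point[OF F ne] by blast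
  moreover have "w \<in> Xbar g" using face_of_imp_subset[OF F] \<open>w \<in> F\<close> by auto
  ultimately show ?thesis using E_ncalt by metis
qed

end


context NCA
begin

abbreviation fl :: "'n \<times> 'n" where "fl \<equiv> (first_idx, last_idx)"

lemma fl_lt: "fst fl < snd fl" using first_less_last by simp

lemma Xg_face: "Xg g face_of Xbar g" using FS_face Xg_FS by simp

lemma Xg_sub: "Xg g \<subseteq> Xbar g" by (simp add: Xg_def)

lemma fl_in_Xg: "u \<in> Xg g \<Longrightarrow> fl \<in> Eset g u"
  using Xg_FS by (auto simp: FS_def)

lemma tree_real:
  assumes "nca_tree T"
  shows "\<exists>u\<in>Xg g. Eset g u = T"
proof -
  obtain u where u: "u \<in> Xg g" "T \<subseteq> Eset g u" "nca_tree (Eset g u)"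
    using realize[OF nca_ncalt[OF assms]] by blast
  have "T = Eset g u"
    using tree_nested_eq[of T "Eset g u"] u assms by (simp add: nca_tree_iff)
  then show ?thesis using u by blast
qed

lemma tree_fl: "nca_tree T \<Longrightarrow> fl \<in> T"
  using tree_real fl_in_Xg by blast

lemma face_Xg_Xbar: "F face_of Xg g \<Longrightarrow> F face_of Xbar g"
  using face_of_trans Xg_face by blast

lemma face_Xbar_Xg: "F face_of Xbar g \<Longrightarrow> F \<subseteq> Xg g \<Longrightarrow> F face_of Xg g"
  using face_of_subset Xg_sub by blast

lemma FS_Xg: "fl \<in> S \<Longrightarrow> FS S \<subseteq> Xg g"
  using Xg_FS by (auto simp: FS_def)

lemma FS_anti: "S \<subseteq> S' \<Longrightarrow> FS S' \<subseteq> FS S"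
  by (auto simp: FS_def)

lemma FS_tree_single:
  assumes vX: "v \<in> Xbar g" and tr: "nca_tree (Eset g v)"
  shows "FS (Eset g v) = {v}"
proof
  show "{v} \<subseteq> FS (Eset g v)" using vX by (simp add: FS_def)
  show "FS (Eset g v) \<subseteq> {v}"
  proof
    fix x assume "x \<in> FS (Eset g v)"
    then have "x \<in> Xbar g" "Eset g v \<subseteq> Eset g x" by (auto simp: FS_def)
    then have "x = v" using tree_unique[OF nca_conn[OF tr], of x v] vX by (simp add: Xbar_def)
    then show "x \<in> {v}" by simp
  qed
qed

lemma ext_char: "v extreme_point_of Xbar g \<longleftrightarrow> v \<in> Xbar g \<and> nca_tree (Eset g v)"
proof
  assume ext: "v extreme_point_of Xbar g"
  then have vX: "v \<in> Xbar g" by (simp add: extreme_point_of_def)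
  have fc: "{v} face_of Xbar g" using ext by (simp add: face_of_singleton)
  have EFv: "EF {v} = Eset g v" by (simp add: EF_def)
  have single: "FS (Eset g v) = {v}" using face_FS[OF fc] EFv by simp
  obtain u where u: "u \<in> Xg g" "Eset g v \<subseteq> Eset g u" "nca_tree (Eset g u)"
    using realize[OF E_ncalt[OF vX]] by blast
  have uX: "u \<in> Xbar g" using u Xg_sub by auto
  have "Eset g v = Eset g u"
  proof (rule ccontr)
    assume "Eset g v \<noteq> Eset g u"
    then obtain e where e: "e \<in> Eset g u" "e \<notin> Eset g v" using u by auto
    obtain t where t: "\<forall>e\<in>Eset g u. u + t *\<^sub>R dvec (Eset g u) e \<in> Xbar g \<and>
           Eset g (u + t *\<^sub>R dvec (Eset g u) e) = Eset g u - {e}"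
      using pert[OF uX u(3)] by blast
    have "u + t *\<^sub>R dvec (Eset g u) e \<in> FS (Eset g v)" using t e u by (auto simp: FS_def)
    moreover have "u \<in> FS (Eset g v)" using uX u by (simp add: FS_def)
    ultimately have "u + t *\<^sub>R dvec (Eset g u) e = u" using single by auto
    then have "Eset g u - {e} = Eset g u" using t e by metis
    then show False using e by auto
  qed
  then show "v \<in> Xbar g \<and> nca_tree (Eset g v)" using vX u by simp
next
  assume "v \<in> Xbar g \<and> nca_tree (Eset g v)"
  then have "FS (Eset g v) = {v}" using FS_tree_single by blast
  then have "{v} face_of Xbar g" using FS_face by metis
  then show "v extreme_point_of Xbar g" by (simp add: face_of_singleton)
qed

lemma ext_Xg: "v extreme_point_of Xg g \<longleftrightarrow> v extreme_point_of Xbar g"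
proof
  assume "v extreme_point_of Xg g"
  then show "v extreme_point_of Xbar g" using extreme_point_of_face[OF Xg_face] by blast
next
  assume e: "v extreme_point_of Xbar g"
  then have vX: "v \<in> Xbar g" and tr: "nca_tree (Eset g v)" using ext_char by auto
  have "fl \<in> Eset g v" using tree_fl[OF tr] .
  then have "v \<in> Xg g" using vX Xg_FS by (simp add: FS_def)
  then show "v extreme_point_of Xg g" using extreme_point_of_face[OF Xg_face] e by blast
qed

lemma aff_dim_Xbar: "aff_dim (Xbar g) = int (CARD('n) - 1)"
proof (rule antisym)
  have "Xbar g \<subseteq> {x. axis first_idx 1 \<bullet> x = (0::real)}"
    by (auto simp: Xbar_def inner_commute[of "axis _ _"] inner_axis)
  then have "aff_dim (Xbar g) \<le> aff_dim {x::(real, 'n) vec. axis first_idx 1 \<bullet> x = 0}" by (rule aff_dim_subset)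
  also have "\<dots> = int (CARD('n) - 1)" by (subst aff_dim_hyperplane) (auto simp: axis_eq_0_iff)
  finally show "aff_dim (Xbar g) \<le> int (CARD('n) - 1)" .
  obtain u where u: "u \<in> Xg g" "{} \<subseteq> Eset g u" "nca_tree (Eset g u)"
    using realize[of "{}"] by (auto simp: ncalt_def alternating_def noncrossing_def)
  have uX: "u \<in> Xbar g" using u Xg_sub by auto
  have FS0: "FS {} = Xbar g" by (simp add: FS_def)
  have ad: "aff_dim (Xbar g) = int (card (Eset g u))"
    using aff_dim_FS[OF uX u(3), of "{}"] FS0 by simp
  define T where "T = Eset g u"
  have "{x::(real, 'n) vec. axis first_idx 1 \<bullet> x = 0} \<subseteq> (+) u ` span (dvec T ` T)"
  proof
    fix v :: "(real, 'n) vec" assume "v \<in> {x. axis first_idx 1 \<bullet> x = 0}"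
    then have v1: "v $ first_idx = 0" by (simp add: inner_commute[of "axis _ _"] inner_axis)
    have "v - u \<in> span (dvec T ` (T - {}))"
      using FS_span_gen[OF uX u(3), of "{}" v] v1 by (simp add: T_def)
    then show "v \<in> (+) u ` span (dvec T ` T)" by (intro image_eqI[of _ _ "v - u"]) auto
  qed
  then have "aff_dim {x::(real, 'n) vec. axis first_idx 1 \<bullet> x = 0} \<le> aff_dim ((+) u ` span (dvec T ` T))"
    by (rule aff_dim_subset)
  also have "\<dots> = int (card T)"
    using dvec_indep[OF u(3)[folded T_def], of 1 T]
    by (simp add: aff_dim_translation_eq aff_dim_subspace dim_span_eq_card_independent dim_eq_card_independent card_image)
  also have "\<dots> = aff_dim (Xbar g)" using ad by (simp add: T_def)
  finally show "int (CARD('n) - 1) \<le> aff_dim (Xbar g)"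
    by (subst (asm) aff_dim_hyperplane) (auto simp: axis_eq_0_iff)
qed

lemma card_tree:
  fixes T :: "('n \<times> 'n) set"
  assumes "nca_tree T"
  shows "card T = CARD('n) - 1"
proof -
  obtain u where u: "u \<in> Xg g" "Eset g u = T" using tree_real[OF assms] by blast
  have uX: "u \<in> Xbar g" using u Xg_sub by auto
  have "aff_dim (FS {}) = int (card (Eset g u - {}))"
    using aff_dim_FS[OF uX] u assms by simp
  moreover have "FS {} = Xbar g" by (simp add: FS_def)
  ultimately show ?thesis using aff_dim_Xbar u by simp
qed

lemma Xbar_eq:
  "Xbar g = {x. axis first_idx 1 \<bullet> x = 0} \<inter>
     \<Inter> ((\<lambda>p. {x. g (fst p) (snd p) \<le> (axis (snd p) 1 - axis (fst p) 1) \<bullet> x}) ` {p. fst p < snd p})"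
  by (auto simp: Xbar_def inner_diff_left inner_commute[of "axis _ _"] inner_axis)

lemma polyhedron_Xbar: "polyhedron (Xbar g)"
  unfolding Xbar_eq
  by (intro polyhedron_Int polyhedron_hyperplane polyhedron_Inter) (auto intro: polyhedron_halfspace_ge)

lemma polyhedron_Xg: "polyhedron (Xg g)"
proof -
  have "Xg g = Xbar g \<inter> {x. (axis last_idx 1 - axis first_idx 1) \<bullet> x = g first_idx last_idx}"
    by (auto simp: Xg_def inner_diff_left inner_commute[of "axis _ _"] inner_axis)
  then show ?thesis using polyhedron_Xbar polyhedron_Int polyhedron_hyperplane by metis
qed

lemma bounded_Xg: "bounded (Xg g)"
proof -
  define M where "M = (\<Sum>k\<in>UNIV. \<bar>g first_idx k\<bar> + \<bar>g first_idx last_idx\<bar> + \<bar>g k last_idx\<bar>)"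
  have comp: "\<bar>v $ k\<bar> \<le> \<bar>g first_idx k\<bar> + \<bar>g first_idx last_idx\<bar> + \<bar>g k last_idx\<bar>" if v: "v \<in> Xg g" for v k
  proof -
    have v0: "v $ first_idx = 0" and vl: "v $ last_idx = g first_idx last_idx"
      and feas: "\<And>i j. i < j \<Longrightarrow> g i j \<le> v $ j - v $ i"
      using v by (auto simp: Xg_def Xbar_def)
    consider "k = first_idx" | "k = last_idx" | "first_idx < k" "k < last_idx"
      using first_le[of k] le_last[of k] by (auto simp: order.order_iff_strict)
    then show ?thesis
    proof cases
      case 1 then show ?thesis using v0 by simp
    next
      case 2 then show ?thesis using vl by simp
    next
      case 3
      have "g first_idx k \<le> v $ k" using feas[OF 3(1)] v0 by simp
      moreover have "g k last_idx \<le> g first_idx last_idx - v $ k" using feas[OF 3(2)] vl by simp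
      ultimately show ?thesis by linarith
    qed
  qed
  have "\<forall>v\<in>Xg g. norm v \<le> M"
  proof
    fix v assume "v \<in> Xg g"
    have "norm v \<le> (\<Sum>k\<in>UNIV. \<bar>v $ k\<bar>)" by (rule norm_le_l1_cart)
    also have "\<dots> \<le> M" unfolding M_def by (intro sum_mono comp[OF \<open>v \<in> Xg g\<close>])
    finally show "norm v \<le> M" .
  qed
  then show ?thesis by (auto simp: bounded_iff)
qed

lemma polytope_Xg: "polytope (Xg g)"
  using polyhedron_Xg bounded_Xg by (simp add: polytope_eq_bounded_polyhedron)

lemma unbounded_Xbar: "\<not> bounded (Xbar g)"
proof
  assume "bounded (Xbar g)"
  then obtain a where a: "\<forall>x\<in>Xbar g. norm x \<le> a" by (auto simp: bounded_iff)
  obtain u where u: "u \<in> Xg g" using realize[of "{}"] by (auto simp: ncalt_def alternating_def noncrossing_def)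
  have uX: "u \<in> Xbar g" using u Xg_sub by auto
  define d :: "(real, 'n) vec" where "d = (\<chi> k. if k = first_idx then 0 else 1)"
  define t where "t = \<bar>a\<bar> + \<bar>u $ last_idx\<bar> + 1"
  have "u + t *\<^sub>R d \<in> Xbar g"
    unfolding Xbar_iff
  proof (intro conjI allI impI)
    show "(u + t *\<^sub>R d) $ first_idx = 0" using uX by (simp add: d_def Xbar_iff)
    fix i j :: 'n assume ij: "i < j"
    have "j \<noteq> first_idx" using ij first_le[of i] by auto
    moreover have "t \<ge> 0" by (simp add: t_def)
    ultimately have "d $ j - d $ i \<ge> 0" "t * (d $ j - d $ i) \<ge> 0" by (auto simp: d_def)
    moreover have "g i j \<le> u $ j - u $ i" using uX ij by (simp add: Xbar_iff)
    ultimately show "g i j \<le> (u + t *\<^sub>R d) $ j - (u + t *\<^sub>R d) $ i" by (simp add: algebra_simps)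
  qed
  then have "norm (u + t *\<^sub>R d) \<le> a" using a by blast
  moreover have "\<bar>(u + t *\<^sub>R d) $ last_idx\<bar> \<le> norm (u + t *\<^sub>R d)" by (rule component_le_norm_cart)
  moreover have "(u + t *\<^sub>R d) $ last_idx = u $ last_idx + t"
    using first_less_last by (simp add: d_def)
  ultimately show False unfolding t_def by linarith
qed

end


definition rk :: "'n::{finite,linorder} \<Rightarrow> nat" where
  "rk i = card {k. k < i}"

lemma rk_mono: "i < j \<Longrightarrow> rk i < rk j"
  unfolding rk_def by (rule psubset_card_mono) auto

lemma rk_less_iff: "rk i < rk j \<longleftrightarrow> i < j"
proof
  assume "rk i < rk j"
  show "i < j"
  proof (rule ccontr)
    assume "\<not> i < j"
    then have "{k. k < j} \<subseteq> {k. k < i}" by auto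
    then have "rk j \<le> rk i" unfolding rk_def by (intro card_mono) auto
    then show False using \<open>rk i < rk j\<close> by simp
  qed
qed (rule rk_mono)

lemma rk_inj: "inj rk"
proof (rule injI)
  fix x y :: 'a assume "rk x = rk y"
  then have "\<not> x < y" "\<not> y < x" using rk_mono by (metis less_irrefl)+
  then show "x = y" by simp
qed

lemma rk_lt: "rk (i::'n::{finite,linorder}) < CARD('n)"
  unfolding rk_def by (rule psubset_card_mono) auto

lemma rk_surj: "rk ` (UNIV::'n::{finite,linorder} set) = {..<CARD('n)}"
proof (rule card_subset_eq)
  show "rk ` (UNIV::'n set) \<subseteq> {..<CARD('n)}" using rk_lt by auto
  show "card (rk ` (UNIV::'n set)) = card {..<CARD('n)}"
    using card_image[of rk "UNIV::'n set"] rk_inj by simp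
qed simp

lemma rk_first: "rk (first_idx::'n::{finite,linorder}) = 0"
proof -
  have "{k. k < (first_idx::'n)} = {}" using first_le by (auto simp: not_less[symmetric])
  then show ?thesis by (simp add: rk_def)
qed

lemma rk_last: "rk (last_idx::'n::{finite,linorder}) = CARD('n) - 1"
proof -
  have "{k. k < (last_idx::'n)} = UNIV - {last_idx}" using le_last by (auto simp: order.order_iff_strict)
  then show ?thesis unfolding rk_def by (simp add: card_Diff_singleton)
qed

definition dmap :: "'n::{finite,linorder} \<times> 'n \<Rightarrow> nat \<times> nat" where
  "dmap p = (rk (fst p), rk (snd p) + 1)"

lemma dmap_inj: "inj dmap"
  by (rule injI) (auto simp: dmap_def prod_eq_iff dest: injD[OF rk_inj])

context NCA
begin

lemma EF_fl: "F \<subseteq> Xg g \<Longrightarrow> fl \<in> EF F"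
  using fl_in_Xg by (auto simp: EF_def)

lemma EF_anti: "F \<subseteq> F' \<Longrightarrow> EF F' \<subseteq> EF F"
  by (auto simp: EF_def)

lemma dmap_fl: "dmap fl = (0, CARD('n))"
proof -
  have "rk (last_idx::'n) = CARD('n) - 1" "rk (first_idx::'n) = 0" by (rule rk_last, rule rk_first)
  then show ?thesis using card2 by (simp add: dmap_def)
qed

lemma poset: "face_poset_iso (Xg g) (assoc_faces CARD('n))"
proof -
  define N where "N = CARD('n)"
  define NF where "NF = {F. F face_of Xg g \<and> F \<noteq> {}}"
  define \<phi> where "\<phi> F = dmap ` (EF F - {fl})" for F
  have NFp: "F face_of Xbar g \<and> F = FS (EF F) \<and> fl \<in> EF F \<and> ncalt (EF F)" if "F \<in> NF" for F
  proof -
    have F: "F face_of Xg g" "F \<noteq> {}" using that by (auto simp: NF_def)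
    have FX: "F face_of Xbar g" using face_Xg_Xbar F(1) by blast
    have "F \<subseteq> Xg g" using face_of_imp_subset F(1) by blast
    then show ?thesis using FX face_FS[OF FX F(2)] EF_fl face_EF_ncalt[OF FX F(2)] by blast
  qed
  have inj: "inj_on \<phi> NF"
  proof (rule inj_onI)
    fix F F' assume FF: "F \<in> NF" "F' \<in> NF" "\<phi> F = \<phi> F'"
    then have "dmap ` (EF F - {fl}) = dmap ` (EF F' - {fl})" by (simp add: \<phi>_def)
    then have "EF F - {fl} = EF F' - {fl}" by (rule inj_image_eq_iff[OF dmap_inj, THEN iffD1])
    then have "EF F = EF F'" using NFp[OF FF(1)] NFp[OF FF(2)] by blast
    then show "F = F'" using NFp[OF FF(1)] NFp[OF FF(2)] by metis
  qed
  have into: "\<phi> F \<in> assoc_faces N" if FN: "F \<in> NF" for F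
  proof -
    have nc: "ncalt (EF F)" and flF: "fl \<in> EF F" using NFp[OF FN] by auto
    have lt: "\<And>i j. (i, j) \<in> EF F \<Longrightarrow> i < j" using nc by (auto simp: ncalt_def)
    have "\<phi> F \<subseteq> diagonals N"
    proof
      fix d assume "d \<in> \<phi> F"
      then obtain p where p: "p \<in> EF F - {fl}" "d = dmap p" by (auto simp: \<phi>_def)
      obtain i j where pij: "p = (i, j)" by (cases p)
      have ij: "(i, j) \<in> EF F" "(i, j) \<noteq> fl" "d = (rk i, rk j + 1)"
        using p pij by (auto simp: dmap_def)
      have "rk i < rk j" using lt[OF ij(1)] rk_mono by blast
      moreover have "rk j < N" using rk_lt by (simp add: N_def)
      moreover have "(rk i, rk j + 1) \<noteq> (0, N)"
      proof
        assume "(rk i, rk j + 1) = (0, N)"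
        moreover have "rk (last_idx::'n) = CARD('n) - 1" "rk (first_idx::'n) = 0" by (rule rk_last, rule rk_first)
        ultimately have "rk i = rk (first_idx::'n)" "rk j = rk (last_idx::'n)" using card2 by (auto simp: N_def)
        then have "i = first_idx" "j = last_idx" using injD[OF rk_inj] by auto
        then show False using ij(2) by simp
      qed
      ultimately show "d \<in> diagonals N" unfolding ij(3) diagonals_def by simp
    qed
    moreover have "noncrossing_diags (\<phi> F)"
      unfolding noncrossing_diags_def
    proof clarify
      fix a b c d assume ab: "(a, b) \<in> \<phi> F" and cd: "(c, d) \<in> \<phi> F" and ord: "a < c" "c < b" "b < d"
      obtain p where p: "p \<in> EF F - {fl}" "(a, b) = dmap p" using ab by (auto simp: \<phi>_def)
      obtain i j where pij: "p = (i, j)" by (cases p)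
      have ij: "(i, j) \<in> EF F" "a = rk i" "b = rk j + 1" using p pij by (auto simp: dmap_def)
      obtain q where q: "q \<in> EF F - {fl}" "(c, d) = dmap q" using cd by (auto simp: \<phi>_def)
      obtain k l where qkl: "q = (k, l)" by (cases q)
      have kl: "(k, l) \<in> EF F" "c = rk k" "d = rk l + 1" using q qkl by (auto simp: dmap_def)
      have ik: "i < k" using ord ij kl rk_less_iff by auto
      have kj: "\<not> j < k" using ord ij kl rk_less_iff[of j k] by auto
      have jl: "j < l" using ord ij kl rk_less_iff by auto
      show False
      proof (cases "k = j")
        case True
        then show False using nc ij(1) kl(1) ik jl unfolding ncalt_def alternating_def by blast
      next
        case False
        then have "k < j" using kj by auto
        then show False using nc ij(1) kl(1) ik jl unfolding ncalt_def noncrossing_def by blast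
      qed
    qed
    ultimately show ?thesis by (simp add: assoc_faces_def)
  qed
  have onto: "D \<in> \<phi> ` NF" if DA: "D \<in> assoc_faces N" for D
  proof -
    have Ddiag: "D \<subseteq> diagonals N" and Dnc: "noncrossing_diags D" using DA by (auto simp: assoc_faces_def)
    define S0 where "S0 = {p::'n \<times> 'n. fst p < snd p \<and> dmap p \<in> D}"
    have imS0: "dmap ` S0 = D"
    proof
      show "dmap ` S0 \<subseteq> D" by (auto simp: S0_def)
      show "D \<subseteq> dmap ` S0"
      proof
        fix d assume dD: "d \<in> D"
        obtain a b where d: "d = (a, b)" by (cases d)
        have ab: "a + 2 \<le> b" "b \<le> N" using dD Ddiag d by (auto simp: diagonals_def)
        have "a < N" "b - 1 < N" using ab by auto
        then have "a \<in> rk ` (UNIV::'n set)" "b - 1 \<in> rk ` (UNIV::'n set)"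
          using rk_surj[where 'n='n] by (auto simp: N_def)
        then obtain i j :: 'n where i: "a = rk i" and j: "b - 1 = rk j" by (meson imageE)
        have "rk i < rk j" using i j ab by linarith
        then have "i < j" by (simp add: rk_less_iff)
        moreover have "dmap (i, j) = d" using i j ab d by (auto simp: dmap_def)
        ultimately have "(i, j) \<in> S0" "d = dmap (i, j)" using dD by (auto simp: S0_def)
        then show "d \<in> dmap ` S0" by blast
      qed
    qed
    have flS0: "fl \<notin> S0" using Ddiag dmap_fl by (auto simp: S0_def diagonals_def N_def)
    define S where "S = insert fl S0"
    have D_nc: "\<And>a b c d. (a, b) \<in> D \<Longrightarrow> (c, d) \<in> D \<Longrightarrow> a < c \<Longrightarrow> c < b \<Longrightarrow> b < d \<Longrightarrow> False"
      using Dnc unfolding noncrossing_diags_def by blast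
    have ncS: "ncalt S"
      unfolding ncalt_def
    proof (intro conjI)
      show "S \<subseteq> {(i, j). i < j}" using fl_lt by (auto simp: S_def S0_def)
      show "alternating S"
        unfolding alternating_def
      proof clarify
        fix i j k assume o: "i < j" "j < k" and ij: "(i, j) \<in> S" and jk: "(j, k) \<in> S"
        show False
        proof (cases "(i, j) = fl \<or> (j, k) = fl")
          case True
          then show False using o first_le[of i] le_last[of k] by auto
        next
          case False
          then have "dmap (i, j) \<in> D" "dmap (j, k) \<in> D" using ij jk by (auto simp: S_def S0_def)
          then have "(rk i, rk j + 1) \<in> D" "(rk j, rk k + 1) \<in> D" by (simp_all add: dmap_def)
          moreover have "rk i < rk j" "rk j < rk k" using o rk_mono by auto
          ultimately show False using D_nc[of "rk i" "rk j + 1" "rk j" "rk k + 1"] by simp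
        qed
      qed
      show "noncrossing S"
        unfolding noncrossing_def
      proof clarify
        fix i j k l assume o: "i < j" "j < k" "k < l" and ik: "(i, k) \<in> S" and jl: "(j, l) \<in> S"
        show False
        proof (cases "(i, k) = fl \<or> (j, l) = fl")
          case True
          then show False using o first_le[of i] le_last[of l] by auto
        next
          case False
          then have "dmap (i, k) \<in> D" "dmap (j, l) \<in> D" using ik jl by (auto simp: S_def S0_def)
          then have "(rk i, rk k + 1) \<in> D" "(rk j, rk l + 1) \<in> D" by (simp_all add: dmap_def)
          moreover have "rk i < rk j" "rk j < rk k" "rk k < rk l" using o rk_mono by auto
          ultimately show False using D_nc[of "rk i" "rk k + 1" "rk j" "rk l + 1"] by simp
        qed
      qed
    qed
    obtain u where u: "u \<in> Xg g" "S \<subseteq> Eset g u" "nca_tree (Eset g u)" using realize[OF ncS] by blast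
    have uX: "u \<in> Xbar g" using u Xg_sub by auto
    define F where "F = FS S"
    have FXg: "F \<subseteq> Xg g" using FS_Xg by (simp add: F_def S_def)
    have "F face_of Xbar g" using FS_face by (simp add: F_def)
    then have Fface: "F face_of Xg g" using face_Xbar_Xg FXg by blast
    have Fne: "F \<noteq> {}" using uX u by (auto simp: F_def FS_def)
    have "EF F = S" using EF_FS[OF uX u(3) u(2)] by (simp add: F_def)
    then have "\<phi> F = D" using flS0 imS0 by (simp add: \<phi>_def S_def)
    moreover have "F \<in> NF" using Fface Fne by (simp add: NF_def)
    ultimately show ?thesis by blast
  qed
  have bij: "bij_betw \<phi> NF (assoc_faces N)"
    unfolding bij_betw_def using inj into onto by blast
  have ord: "F \<subseteq> F' \<longleftrightarrow> \<phi> F' \<subseteq> \<phi> F" if FN: "F \<in> NF" "F' \<in> NF" for F F'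
  proof
    assume "F \<subseteq> F'"
    then have "EF F' \<subseteq> EF F" by (rule EF_anti)
    then show "\<phi> F' \<subseteq> \<phi> F" by (auto simp: \<phi>_def)
  next
    assume "\<phi> F' \<subseteq> \<phi> F"
    then have "dmap ` (EF F' - {fl}) \<subseteq> dmap ` (EF F - {fl})" by (simp add: \<phi>_def)
    then have "EF F' - {fl} \<subseteq> EF F - {fl}" by (rule inj_image_subset_iff[OF dmap_inj, THEN iffD1])
    then have "EF F' \<subseteq> EF F" using NFp[OF FN(1)] by blast
    then have "FS (EF F) \<subseteq> FS (EF F')" by (rule FS_anti)
    then show "F \<subseteq> F'" using NFp[OF FN(1)] NFp[OF FN(2)] by metis
  qed
  show ?thesis
    unfolding face_poset_iso_def
  proof (intro exI[of _ \<phi>] conjI allI impI)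
    show "bij_betw \<phi> {F. F face_of Xg g \<and> F \<noteq> {}} (assoc_faces CARD('n))"
      using bij by (simp add: NF_def N_def)
    fix F F' assume h: "F face_of Xg g \<and> F \<noteq> {} \<and> F' face_of Xg g \<and> F' \<noteq> {}"
    then have "F \<in> NF" "F' \<in> NF" by (simp_all add: NF_def)
    then show "F \<subseteq> F' \<longleftrightarrow> \<phi> F' \<subseteq> \<phi> F" by (rule ord)
  qed
qed

end


context NCA
begin

lemma ext_props:
  assumes "v extreme_point_of Xg g"
  shows "v \<in> Xg g" "v \<in> Xbar g" "nca_tree (Eset g v)" "fl \<in> Eset g v"
proof -
  show vXg: "v \<in> Xg g" using assms by (simp add: extreme_point_of_def)
  show "v \<in> Xbar g" "nca_tree (Eset g v)" using assms ext_Xg ext_char by auto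
  show "fl \<in> Eset g v" using fl_in_Xg[OF vXg] .
qed

lemma simple: "simple_polytope (Xg g)"
  unfolding simple_polytope_def
proof (intro conjI allI impI)
  show "polytope (Xg g)" by (rule polytope_Xg)
  fix v assume ext: "v extreme_point_of Xg g"
  note vp = ext_props[OF ext]
  define T where "T = Eset g v"
  have tr: "nca_tree T" and flT: "fl \<in> T" using vp by (auto simp: T_def)
  have finT: "finite T" by simp
  have adXg: "aff_dim (Xg g) = int (card (T - {fl}))"
    using aff_dim_FS[OF vp(2) vp(3), of "{fl}"] flT Xg_FS by (simp add: T_def)
  have adF: "aff_dim (FS S) = int (card (T - S))" if "S \<subseteq> T" for S
    using aff_dim_FS[OF vp(2) vp(3), of S] that by (simp add: T_def)
  have EFF: "EF (FS S) = S" if "S \<subseteq> T" for S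
    using EF_FS[OF vp(2) vp(3), of S] that by (simp add: T_def)
  have seteq: "{F. F facet_of Xg g \<and> v \<in> F} = (\<lambda>e. FS {fl, e}) ` (T - {fl})"
  proof
    show "{F. F facet_of Xg g \<and> v \<in> F} \<subseteq> (\<lambda>e. FS {fl, e}) ` (T - {fl})"
    proof clarify
      fix F assume fac: "F facet_of Xg g" and vF: "v \<in> F"
      have Ff: "F face_of Xg g" "F \<noteq> {}" "aff_dim F = aff_dim (Xg g) - 1"
        using fac by (auto simp: facet_of_def)
      have FX: "F face_of Xbar g" using face_Xg_Xbar Ff(1) by blast
      define S where "S = EF F"
      have FS_eq: "F = FS S" using face_FS[OF FX Ff(2)] by (simp add: S_def)
      have ST: "S \<subseteq> T" using vF by (auto simp: S_def EF_def T_def)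
      have flS: "fl \<in> S" unfolding S_def by (rule EF_fl[OF face_of_imp_subset[OF Ff(1)]])
      have "int (card (T - S)) = int (card (T - {fl})) - 1" using Ff(3) adF[OF ST] adXg FS_eq by simp
      moreover have "card (T - {fl}) = card (T - S) + card (S - {fl})"
      proof -
        have "T - {fl} = (T - S) \<union> (S - {fl})" using ST flS by auto
        moreover have "(T - S) \<inter> (S - {fl}) = {}" by auto
        ultimately show ?thesis using card_Un_disjoint[of "T - S" "S - {fl}"] by simp
      qed
      ultimately have "card (S - {fl}) = 1" by linarith
      then obtain e where e: "S - {fl} = {e}" by (auto simp: card_1_singleton_iff)
      then have "S = {fl, e}" "e \<in> T - {fl}" using flS ST by auto
      then show "F \<in> (\<lambda>e. FS {fl, e}) ` (T - {fl})" using FS_eq by blast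
    qed
    show "(\<lambda>e. FS {fl, e}) ` (T - {fl}) \<subseteq> {F. F facet_of Xg g \<and> v \<in> F}"
    proof
      fix F assume "F \<in> (\<lambda>e. FS {fl, e}) ` (T - {fl})"
      then obtain e where eT: "e \<in> T" "e \<noteq> fl" and Fe: "F = FS {fl, e}" by auto
      have sub: "{fl, e} \<subseteq> T" using eT flT by auto
      have "FS {fl, e} face_of Xbar g" by (rule FS_face)
      moreover have "FS {fl, e} \<subseteq> Xg g" by (rule FS_Xg) simp
      ultimately have fc: "FS {fl, e} face_of Xg g" using face_Xbar_Xg by blast
      have vF: "v \<in> FS {fl, e}" using sub vp(2) by (simp add: FS_def T_def)
      have "T - {fl, e} = (T - {fl}) - {e}" by auto
      moreover have "e \<in> T - {fl}" using eT by simp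
      ultimately have "card (T - {fl, e}) = card (T - {fl}) - 1" by (simp add: card_Diff_singleton)
      moreover have "card (T - {fl}) \<ge> 1" using \<open>e \<in> T - {fl}\<close> card_gt_0_iff[of "T - {fl}"]
        by auto
      ultimately have "aff_dim (FS {fl, e}) = aff_dim (Xg g) - 1" using adF[OF sub] adXg by simp
      then show "F \<in> {F. F facet_of Xg g \<and> v \<in> F}" using fc vF Fe by (auto simp: facet_of_def)
    qed
  qed
  have inj: "inj_on (\<lambda>e. FS {fl, e}) (T - {fl})"
  proof (rule inj_onI)
    fix e e' assume e: "e \<in> T - {fl}" "e' \<in> T - {fl}" "FS {fl, e} = FS {fl, e'}"
    have s1: "{fl, e} \<subseteq> T" "{fl, e'} \<subseteq> T" using e flT by auto
    from e(3) have "EF (FS {fl, e}) = EF (FS {fl, e'})" by simp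
    then have "{fl, e} = {fl, e'}" using EFF[OF s1(1)] EFF[OF s1(2)] by simp
    then show "e = e'" using e by (auto simp: doubleton_eq_iff)
  qed
  show "card {F. F facet_of Xg g \<and> v \<in> F} = nat (aff_dim (Xg g))"
    using seteq inj adXg by (simp add: card_image)
qed

lemma affdim_Xg: "aff_dim (Xg g) = int CARD('n) - 2"
proof -
  obtain u where u: "u \<in> Xg g" "nca_tree (Eset g u)"
    using realize[of "{}"] by (auto simp: ncalt_def alternating_def noncrossing_def)
  have uX: "u \<in> Xbar g" using u Xg_sub by auto
  have flu: "fl \<in> Eset g u" using fl_in_Xg[OF u(1)] .
  have "aff_dim (Xg g) = int (card (Eset g u - {fl}))"
    using aff_dim_FS[OF uX u(2), of "{fl}"] flu Xg_FS by simp
  also have "card (Eset g u - {fl}) = CARD('n) - 2"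
    using card_tree[OF u(2)] flu by (simp add: card_Diff_singleton)
  finally show ?thesis using card2 by simp
qed

lemma vert_bij: "bij_betw (Eset g) {v. v extreme_point_of Xg g} {T. nca_tree T}"
  unfolding bij_betw_def
proof (intro conjI)
  show "inj_on (Eset g) {v. v extreme_point_of Xg g}"
  proof (rule inj_onI)
    fix v w assume v: "v \<in> {v. v extreme_point_of Xg g}" and w: "w \<in> {v. v extreme_point_of Xg g}"
      and eq: "Eset g v = Eset g w"
    note vp = ext_props[of v] and wp = ext_props[of w]
    show "v = w"
      using tree_unique[OF nca_conn[OF vp(3)], of v w] v w eq vp(2) wp(2) by (simp add: Xbar_def)
  qed
  show "Eset g ` {v. v extreme_point_of Xg g} = {T. nca_tree T}"
  proof
    show "Eset g ` {v. v extreme_point_of Xg g} \<subseteq> {T. nca_tree T}" using ext_props by auto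
    show "{T. nca_tree T} \<subseteq> Eset g ` {v. v extreme_point_of Xg g}"
    proof
      fix T :: "('n \<times> 'n) set" assume "T \<in> {T. nca_tree T}"
      then have tr: "nca_tree T" by simp
      obtain u where u: "u \<in> Xg g" "Eset g u = T" using tree_real[OF tr] by blast
      have "u extreme_point_of Xg g" using u tr Xg_sub ext_char ext_Xg by auto
      then show "T \<in> Eset g ` {v. v extreme_point_of Xg g}" using u by blast
    qed
  qed
qed

lemma adjacency:
  assumes eu: "u extreme_point_of Xg g" and ew: "w extreme_point_of Xg g"
  shows "adjacent_vertices (Xg g) u w \<longleftrightarrow>
            card (Eset g u - Eset g w) = 1 \<and> card (Eset g w - Eset g u) = 1"
proof -
  note up = ext_props[OF eu] and wp = ext_props[OF ew]
  define Tu where "Tu = Eset g u"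
  define Tw where "Tw = Eset g w"
  have cards: "card Tu = card Tw" using card_tree up(3) wp(3) by (simp add: Tu_def Tw_def)
  have ueqw: "u = w \<longleftrightarrow> Tu = Tw"
  proof
    assume "Tu = Tw"
    then show "u = w" using tree_unique[OF nca_conn[OF up(3)], of u w] up(2) wp(2) by (simp add: Xbar_def Tu_def Tw_def)
  qed (simp add: Tu_def Tw_def)
  have one: "card (Tu - Tw) = 1" if ne: "Tu \<noteq> Tw" and ST: "S \<subseteq> Tw" and c1: "card (Tu - S) = 1"
    and cd: "card Tu = card Tw" for Tu Tw S :: "('n \<times> 'n) set"
  proof -
    have "Tu - Tw \<subseteq> Tu - S" using ST by auto
    then have "card (Tu - Tw) \<le> card (Tu - S)" by (intro card_mono) simp_all
    then have "card (Tu - Tw) \<le> 1" using c1 by simp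
    moreover have "Tu - Tw \<noteq> {}"
    proof
      assume "Tu - Tw = {}"
      then have "Tu \<subseteq> Tw" by auto
      then have "Tu = Tw" using cd by (intro card_subset_eq) auto
      then show False using ne by simp
    qed
    then have "card (Tu - Tw) \<ge> 1" using card_gt_0_iff[of "Tu - Tw"] by simp
    ultimately show ?thesis by simp
  qed
  show ?thesis
  proof
    assume "adjacent_vertices (Xg g) u w"
    then obtain F where uw: "u \<noteq> w" and F: "F face_of Xg g" "aff_dim F = 1" "u \<in> F" "w \<in> F"
      by (auto simp: adjacent_vertices_def)
    have FX: "F face_of Xbar g" using face_Xg_Xbar F(1) by blast
    have Fne: "F \<noteq> {}" using F by auto
    define S where "S = EF F"
    have FS_eq: "F = FS S" using face_FS[OF FX Fne] by (simp add: S_def)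
    have SU: "S \<subseteq> Tu" "S \<subseteq> Tw" using F by (auto simp: S_def EF_def Tu_def Tw_def)
    have cu: "card (Tu - S) = 1" using aff_dim_FS[OF up(2) up(3), of S] SU F FS_eq by (simp add: Tu_def)
    have cw: "card (Tw - S) = 1" using aff_dim_FS[OF wp(2) wp(3), of S] SU F FS_eq by (simp add: Tw_def)
    have ne: "Tu \<noteq> Tw" using ueqw uw by simp
    show "card (Eset g u - Eset g w) = 1 \<and> card (Eset g w - Eset g u) = 1"
      using one[OF ne SU(2) cu cards] one[OF ne[symmetric] SU(1) cw cards[symmetric]] by (simp add: Tu_def Tw_def)
  next
    assume c: "card (Eset g u - Eset g w) = 1 \<and> card (Eset g w - Eset g u) = 1"
    then have "Tu \<noteq> Tw" by (auto simp: Tu_def Tw_def)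
    then have uw: "u \<noteq> w" using ueqw by simp
    define S where "S = Tu \<inter> Tw"
    have flS: "fl \<in> S" using up(4) wp(4) by (simp add: S_def Tu_def Tw_def)
    have "FS S face_of Xbar g" by (rule FS_face)
    moreover have "FS S \<subseteq> Xg g" using FS_Xg flS by simp
    ultimately have fc: "FS S face_of Xg g" using face_Xbar_Xg by blast
    have uF: "u \<in> FS S" "w \<in> FS S" using up(2) wp(2) by (auto simp: FS_def S_def Tu_def Tw_def)
    have "aff_dim (FS S) = int (card (Tu - S))"
      using aff_dim_FS[OF up(2) up(3), of S] by (simp add: S_def Tu_def)
    also have "Tu - S = Tu - Tw" by (auto simp: S_def)
    finally have "aff_dim (FS S) = 1" using c by (simp add: Tu_def Tw_def)
    then show "adjacent_vertices (Xg g) u w" using fc uF uw by (auto simp: adjacent_vertices_def)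
  qed
qed

lemma closed_Xbar: "closed (Xbar g)" using polyhedron_Xbar by (rule polyhedron_imp_closed)

lemma unb_ray:
  assumes tr: "nca_tree T"
  shows "\<not> bounded (FS (T - {fl}))"
proof
  assume bd: "bounded (FS (T - {fl}))"
  define R where "R = FS (T - {fl})"
  obtain u where u: "u \<in> Xg g" "Eset g u = T" using tree_real[OF tr] by blast
  have uX: "u \<in> Xbar g" using u Xg_sub by auto
  have flT: "fl \<in> T" using tree_fl[OF tr] .
  have Rf: "R face_of Xbar g" by (simp add: R_def FS_face)
  have "closed R" using face_of_imp_closed[OF Xbar_convex closed_Xbar Rf] .
  then have cR: "compact R" using bd by (simp add: R_def compact_eq_bounded_closed)
  have cvR: "convex R" using face_of_imp_convex[OF Rf] .
  have "{x. x extreme_point_of R} \<subseteq> Xg g"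
  proof
    fix x assume "x \<in> {x. x extreme_point_of R}"
    then have "x extreme_point_of Xbar g" using extreme_point_of_face[OF Rf] by simp
    then have "x extreme_point_of Xg g" using ext_Xg by simp
    then show "x \<in> Xg g" by (simp add: extreme_point_of_def)
  qed
  then have "convex hull {x. x extreme_point_of R} \<subseteq> convex hull (Xg g)" by (rule hull_mono)
  moreover have "convex hull (Xg g) = Xg g" using face_of_imp_convex[OF Xg_face] by (simp add: convex_hull_eq)
  ultimately have "R \<subseteq> Xg g" using Krein_Milman_Minkowski[OF cR cvR] by simp
  then have "fl \<in> EF R" by (rule EF_fl)
  moreover have "EF R = T - {fl}" unfolding R_def using EF_FS[OF uX, of "T - {fl}"] u tr by auto
  ultimately show False by simp
qed

lemma rays: "bij_betw EF {R. extreme_ray_of R (Xbar g)} ((\<lambda>T. T - {fl}) ` {T. nca_tree T})"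
  unfolding bij_betw_def
proof (intro conjI)
  have rayp: "R face_of Xbar g \<and> R \<noteq> {} \<and> R = FS (EF R) \<and> aff_dim R = 1 \<and> \<not> bounded R"
    if "extreme_ray_of R (Xbar g)" for R
  proof -
    have R: "R face_of Xbar g" "aff_dim R = 1" "\<not> bounded R" using that by (auto simp: extreme_ray_of_def)
    have "R \<noteq> {}" using R(2) by auto
    then show ?thesis using R face_FS by blast
  qed
  show "inj_on EF {R. extreme_ray_of R (Xbar g)}"
  proof (rule inj_onI)
    fix R R' assume "R \<in> {R. extreme_ray_of R (Xbar g)}" "R' \<in> {R. extreme_ray_of R (Xbar g)}" "EF R = EF R'"
    then have "R = FS (EF R)" "R' = FS (EF R')" "EF R = EF R'" using rayp by blast+
    then show "R = R'" by metis
  qed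
  show "EF ` {R. extreme_ray_of R (Xbar g)} = (\<lambda>T. T - {fl}) ` {T. nca_tree T}"
  proof
    show "EF ` {R. extreme_ray_of R (Xbar g)} \<subseteq> (\<lambda>T. T - {fl}) ` {T. nca_tree T}"
    proof clarify
      fix R assume "extreme_ray_of R (Xbar g)"
      note Rp = rayp[OF this]
      define S where "S = EF R"
      have ncS: "ncalt S" using face_EF_ncalt Rp by (simp add: S_def)
      obtain u where u: "u \<in> Xg g" "S \<subseteq> Eset g u" "nca_tree (Eset g u)" using realize[OF ncS] by blast
      have uX: "u \<in> Xbar g" using u Xg_sub by auto
      define T where "T = Eset g u"
      have flT: "fl \<in> T" using fl_in_Xg[OF u(1)] by (simp add: T_def)
      have "card (T - S) = 1" using aff_dim_FS[OF uX u(3) u(2)] Rp by (simp add: S_def T_def)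
      then obtain e where e: "T - S = {e}" by (auto simp: card_1_singleton_iff)
      have "e = fl"
      proof (rule ccontr)
        assume "e \<noteq> fl"
        then have "fl \<in> S" using e flT by auto
        then have "R \<subseteq> Xg g" using Rp FS_Xg by (metis S_def)
        then have "bounded R" using bounded_Xg bounded_subset by blast
        then show False using Rp by simp
      qed
      then have "EF R = T - {fl}" using e u(2) by (auto simp: S_def T_def)
      moreover have "nca_tree T" using u by (simp add: T_def)
      ultimately show "EF R \<in> (\<lambda>T. T - {fl}) ` {T. nca_tree T}" by blast
    qed
    show "(\<lambda>T. T - {fl}) ` {T. nca_tree T} \<subseteq> EF ` {R. extreme_ray_of R (Xbar g)}"
    proof clarify
      fix T :: "('n \<times> 'n) set" assume tr: "nca_tree T"
      obtain u where u: "u \<in> Xg g" "Eset g u = T" using tree_real[OF tr] by blast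
      have uX: "u \<in> Xbar g" using u Xg_sub by auto
      have flT: "fl \<in> T" using tree_fl[OF tr] .
      define R where "R = FS (T - {fl})"
      have "EF R = T - {fl}" unfolding R_def using EF_FS[OF uX, of "T - {fl}"] u tr by auto
      moreover have "aff_dim R = 1"
      proof -
        have "aff_dim R = int (card (T - (T - {fl})))"
          unfolding R_def using aff_dim_FS[OF uX, of "T - {fl}"] u tr by auto
        moreover have "T - (T - {fl}) = {fl}" using flT by auto
        ultimately show ?thesis by simp
      qed
      moreover have "R face_of Xbar g" by (simp add: R_def FS_face)
      moreover have "\<not> bounded R" using unb_ray[OF tr] by (simp add: R_def)
      ultimately show "T - {fl} \<in> EF ` {R. extreme_ray_of R (Xbar g)}"
        by (auto simp: extreme_ray_of_def intro!: image_eqI[of _ _ R])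
    qed
  qed
qed

lemma main:
  shows "simple_polytope (Xg g)
    \<and> aff_dim (Xg g) = int CARD('n) - 2
    \<and> face_poset_iso (Xg g) (assoc_faces CARD('n))
    \<and> bij_betw (Eset g) {v. v extreme_point_of Xg g} {T. nca_tree T}
    \<and> (\<forall>u w. u extreme_point_of Xg g \<and> w extreme_point_of Xg g \<longrightarrow>
         (adjacent_vertices (Xg g) u w \<longleftrightarrow>
            card (Eset g u - Eset g w) = 1 \<and> card (Eset g w - Eset g u) = 1))
    \<and> polyhedron (Xbar g) \<and> \<not> bounded (Xbar g)
    \<and> {v. v extreme_point_of Xbar g} = {v. v extreme_point_of Xg g}
    \<and> bij_betw (\<lambda>R. \<Inter>v\<in>R. Eset g v) {R. extreme_ray_of R (Xbar g)}
         ((\<lambda>T. T - {(first_idx, last_idx)}) ` {T. nca_tree T})"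
proof -
  have "(\<lambda>R. \<Inter>v\<in>R. Eset g v) = EF" by (simp add: EF_def fun_eq_iff)
  then have r: "bij_betw (\<lambda>R. \<Inter>v\<in>R. Eset g v) {R. extreme_ray_of R (Xbar g)}
         ((\<lambda>T. T - {(first_idx, last_idx)}) ` {T. nca_tree T})" using rays by simp
  have e: "{v. v extreme_point_of Xbar g} = {v. v extreme_point_of Xg g}" using ext_Xg by simp
  show ?thesis
    using simple affdim_Xg poset vert_bij adjacency polyhedron_Xbar unbounded_Xbar e r
    by blast
qed

end

theorem theorem5p9:
  fixes g :: "'n::{finite,linorder} \<Rightarrow> 'n \<Rightarrow> real"
  assumes "CARD('n) \<ge> 2"
    and "\<forall>i j k l. i < j \<and> j < k \<and> k < l \<longrightarrow> g i l + g j k > g i k + g j l"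
    and "\<forall>i k l. i < k \<and> k < l \<longrightarrow> g i l > g i k + g k l"
  shows "simple_polytope (Xg g)
    \<and> aff_dim (Xg g) = int CARD('n) - 2
    \<and> face_poset_iso (Xg g) (assoc_faces CARD('n))
    \<and> bij_betw (Eset g) {v. v extreme_point_of Xg g} {T. nca_tree T}
    \<and> (\<forall>u w. u extreme_point_of Xg g \<and> w extreme_point_of Xg g \<longrightarrow>
         (adjacent_vertices (Xg g) u w \<longleftrightarrow>
            card (Eset g u - Eset g w) = 1 \<and> card (Eset g w - Eset g u) = 1))
    \<and> polyhedron (Xbar g) \<and> \<not> bounded (Xbar g)
    \<and> {v. v extreme_point_of Xbar g} = {v. v extreme_point_of Xg g}
    \<and> bij_betw (\<lambda>R. \<Inter>v\<in>R. Eset g v) {R. extreme_ray_of R (Xbar g)}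
         ((\<lambda>T. T - {(first_idx, last_idx)}) ` {T. nca_tree T})"
proof -
  interpret NCA g
    by unfold_locales (use assms in auto)
  show ?thesis by (rule main)
qed

end
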